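(* Let $\mathcal{A}=\{1,\dots,L\}$ and let $Q_T$ be a pmf on $\mathcal{A}$ with $Q_T(a)>0$ for all $a$ and $Q_T\ne U_L$. For each $n\ge1$ let \[ D_n^*=\min_{\emptyset\ne\mathcal{S}\subseteq\mathcal{A}^n}D(U_{\mathcal{S}}\|Q_T^n), \] where $U_{\mathcal{S}}$ is the uniform pmf on $\mathcal{S}$ (viewed as a pmf on $\mathcal{A}^n$). Then $D_n^*$ grows as $\frac12\log_2n$, i.e. $\lim_{n\to\infty}D_n^*/(\tfrac12\log_2 n)=1$, and if for each $n$ the set $\mathcal{S}_n$ attains the minimum $D_n^*$, then the rate $R_{\mathrm{info}}=\frac1n\log_2|\mathcal{S}_n|$ satisfies $R_{\mathrm{info}}\to H(Q_T)$ as $n\to\infty$.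
   Context: $U_L$ is the uniform pmf on $\mathcal{A}$. $D(P\|Q)=\sum_{x:P(x)>0}P(x)\log_2\frac{P(x)}{Q(x)}$ is informational divergence, $Q_T^n(a^n)=\prod_iQ_T(a_i)$ is the iid pmf, and $H(Q_T)=-\sum_aQ_T(a)\log_2Q_T(a)$ is entropy. A block distribution matcher of length $n$ is identified with its codebook $\mathcal{S}\subseteq\mathcal{A}^n$, whose output pmf is $U_{\mathcal{S}}$. *)

theory Defs
  imports "HOL-Analysis.Analysis"
begin

definition words :: "nat \<Rightarrow> nat \<Rightarrow> nat list set" where
  "words L n = {xs. length xs = n \<and> set xs \<subseteq> {1..L}}"

definition unif_L :: "nat \<Rightarrow> nat \<Rightarrow> real" where
  "unif_L L a = (if a \<in> {1..L} then 1 / real L else 0)"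

definition unif_set :: "'a set \<Rightarrow> 'a \<Rightarrow> real" where
  "unif_set S x = (if x \<in> S then 1 / real (card S) else 0)"

definition iid :: "(nat \<Rightarrow> real) \<Rightarrow> nat list \<Rightarrow> real" where
  "iid Q xs = prod_list (map Q xs)"

definition divergence :: "'a set \<Rightarrow> ('a \<Rightarrow> real) \<Rightarrow> ('a \<Rightarrow> real) \<Rightarrow> real" where
  "divergence X P Q = (\<Sum>x\<in>{x\<in>X. P x > 0}. P x * log 2 (P x / Q x))"

definition entropy_L :: "nat \<Rightarrow> (nat \<Rightarrow> real) \<Rightarrow> real" where
  "entropy_L L Q = - (\<Sum>a\<in>{1..L}. Q a * log 2 (Q a))"

definition Dcode :: "nat \<Rightarrow> (nat \<Rightarrow> real) \<Rightarrow> nat \<Rightarrow> nat list set \<Rightarrow> real" where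
  "Dcode L Q n S = divergence (words L n) (unif_set S) (iid Q)"

definition Dstar :: "nat \<Rightarrow> (nat \<Rightarrow> real) \<Rightarrow> nat \<Rightarrow> real" where
  "Dstar L Q n = Min {Dcode L Q n S | S. S \<noteq> {} \<and> S \<subseteq> words L n}"

end

theory Submission
  imports Defs "HOL-Real_Asymp.Real_Asymp"
begin

lemma words_0: "words L 0 = {[]}" by (auto simp: words_def)

lemma words_Suc: "words L (Suc n) = (\<lambda>(a,x). a#x) ` ({1..L} \<times> words L n)"
proof
  show "words L (Suc n) \<subseteq> (\<lambda>(a,x). a#x) ` ({1..L} \<times> words L n)"
  proof
    fix xs assume "xs \<in> words L (Suc n)"
    then obtain a x where "xs = a#x" "length x = n" "a \<in> {1..L}" "set x \<subseteq> {1..L}"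
      unfolding words_def by (cases xs) auto
    then show "xs \<in> (\<lambda>(a,x). a#x) ` ({1..L} \<times> words L n)"
      unfolding words_def by force
  qed
qed (auto simp: words_def)

lemma finite_words: "finite (words L n)"
  by (induction n) (auto simp: words_0 words_Suc)

lemma sum_words_Suc:
  "(\<Sum>x\<in>words L (Suc n). f x) = (\<Sum>a\<in>{1..L}. \<Sum>x\<in>words L n. f (a#x))"
proof -
  have inj: "inj_on (\<lambda>(a,x). a#x) ({1..L} \<times> words L n)" by (auto simp: inj_on_def)
  have "(\<Sum>x\<in>words L (Suc n). f x) = (\<Sum>y\<in>{1..L} \<times> words L n. f (case y of (a,x) \<Rightarrow> a#x))"
    unfolding words_Suc using sum.reindex[OF inj, of f] by (simp add: comp_def)
  also have "\<dots> = (\<Sum>y\<in>{1..L} \<times> words L n. (\<lambda>(a,x). f (a#x)) y)"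
    by (intro sum.cong) (auto split: prod.split)
  also have "\<dots> = (\<Sum>a\<in>{1..L}. \<Sum>x\<in>words L n. f (a#x))"
    by (rule sum.cartesian_product[symmetric])
  finally show ?thesis .
qed

lemma card_words: "card (words L n) = L^n"
proof (induction n)
  case 0 then show ?case by (simp add: words_0)
next
  case (Suc n)
  have inj: "inj_on (\<lambda>(a,x). a#x) ({1..L} \<times> words L n)" by (auto simp: inj_on_def)
  show ?case unfolding words_Suc card_image[OF inj] using Suc
    by (simp add: card_cartesian_product)
qed

locale dm =
  fixes L :: nat and Q :: "nat \<Rightarrow> real"
  assumes pos: "\<forall>a\<in>{1..L}. Q a > 0" and pmf: "(\<Sum>a\<in>{1..L}. Q a) = 1"
begin

abbreviation W where "W n \<equiv> words L n"
definition p where "p x = iid Q x"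
definition sc where "sc x = - log 2 (p x)"
definition cc where "cc a = - log 2 (Q a)"
definition F where "F f x = sum_list (map f x)"
definition mu where "mu f = (\<Sum>a\<in>{1..L}. Q a * f a)"
definition var where "var f = (\<Sum>a\<in>{1..L}. Q a * (f a - mu f)^2)"

lemma Q_le1: "a \<in> {1..L} \<Longrightarrow> Q a \<le> 1"
proof -
  assume a: "a \<in> {1..L}"
  have "Q a \<le> (\<Sum>a\<in>{1..L}. Q a)"
    by (rule member_le_sum) (use a pos in \<open>auto intro: less_imp_le\<close>)
  then show ?thesis using pmf by simp
qed

lemma pmf1[simp]: "(\<Sum>a\<in>{Suc 0..L}. Q a) = 1" using pmf by simp

lemma p_Nil[simp]: "p [] = 1" by (simp add: p_def iid_def)
lemma p_Cons[simp]: "p (a#x) = Q a * p x" by (simp add: p_def iid_def)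
lemma F_Nil[simp]: "F f [] = 0" by (simp add: F_def)
lemma F_Cons[simp]: "F f (a#x) = f a + F f x" by (simp add: F_def)

lemma p_bounds_list: "set x \<subseteq> {1..L} \<Longrightarrow> 0 < p x \<and> p x \<le> 1"
proof (induction x)
  case Nil then show ?case by simp
next
  case (Cons a x)
  then have a: "a \<in> {1..L}" and ih: "0 < p x \<and> p x \<le> 1" by auto
  have "0 < Q a" "Q a \<le> 1" using pos a Q_le1 by auto
  then show ?case using ih by (simp add: mult_le_one)
qed

lemma p_pos: "x \<in> W n \<Longrightarrow> 0 < p x"
  using p_bounds_list by (auto simp: words_def)
lemma p_le1: "x \<in> W n \<Longrightarrow> p x \<le> 1"
  using p_bounds_list by (auto simp: words_def)

lemma sum_p: "(\<Sum>x\<in>W n. p x) = 1"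
proof (induction n)
  case 0 then show ?case by (simp add: words_0)
next
  case (Suc n)
  then show ?case by (simp add: sum_words_Suc sum_distrib_left[symmetric] pmf)
qed

lemma sc_nonneg: "x \<in> W n \<Longrightarrow> 0 \<le> sc x"
  using p_pos[of x n] p_le1[of x n] by (simp add: sc_def)

lemma p_eq: "x \<in> W n \<Longrightarrow> p x = 2 powr (- sc x)"
  using p_pos[of x n] by (simp add: sc_def)

lemma sc_F_list: "set x \<subseteq> {1..L} \<Longrightarrow> sc x = F cc x"
proof (induction x)
  case Nil then show ?case by (simp add: sc_def)
next
  case (Cons a x)
  then have a: "a \<in> {1..L}" and x: "set x \<subseteq> {1..L}" by auto
  have "0 < Q a" using pos a by auto
  moreover have "0 < p x" using p_bounds_list[OF x] by auto
  ultimately have "sc (a#x) = cc a + sc x"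
    by (simp add: sc_def cc_def log_mult)
  then show ?case using Cons x by simp
qed

lemma sc_F: "x \<in> W n \<Longrightarrow> sc x = F cc x"
  using sc_F_list by (auto simp: words_def)

lemma mu_cc: "mu cc = entropy_L L Q"
  by (simp add: mu_def cc_def entropy_L_def sum_negf)

lemma mean_F: "(\<Sum>x\<in>W n. p x * F f x) = n * mu f"
proof (induction n)
  case 0 then show ?case by (simp add: words_0)
next
  case (Suc n)
  have "(\<Sum>x\<in>W (Suc n). p x * F f x) = (\<Sum>a\<in>{1..L}. \<Sum>x\<in>W n. Q a * (p x * f a + p x * F f x))"
    by (simp add: sum_words_Suc algebra_simps)
  also have "\<dots> = (\<Sum>a\<in>{1..L}. Q a * (f a * (\<Sum>x\<in>W n. p x) + (\<Sum>x\<in>W n. p x * F f x)))"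
    by (simp add: sum_distrib_left sum.distrib sum_distrib_right algebra_simps)
  also have "\<dots> = (\<Sum>a\<in>{1..L}. Q a * f a + Q a * (n * mu f))"
    using Suc by (simp add: sum_p algebra_simps)
  also have "\<dots> = (\<Sum>a\<in>{1..L}. Q a * f a) + (\<Sum>a\<in>{1..L}. Q a) * (n * mu f)"
    by (simp add: sum.distrib flip: sum_distrib_right)
  also have "\<dots> = Suc n * mu f"
    by (simp add: pmf mu_def algebra_simps)
  finally show ?case .
qed

lemma centered_F: "(\<Sum>x\<in>W n. p x * (F f x - n * mu f)) = 0"
  by (simp add: right_diff_distrib sum_subtractf mean_F sum_distrib_right[symmetric] sum_p)

lemma second_F: "(\<Sum>x\<in>W n. p x * (F f x - n * mu f)^2) = n * var f"
proof (induction n)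
  case 0 then show ?case by (simp add: words_0)
next
  case (Suc n)
  define m where "m = mu f"
  have e: "\<And>a x. F f (a#x) - real (Suc n) * m = (f a - m) + (F f x - n * m)"
    by (simp add: algebra_simps)
  have "(\<Sum>x\<in>W (Suc n). p x * (F f x - Suc n * m)^2)
      = (\<Sum>a\<in>{1..L}. \<Sum>x\<in>W n. Q a * (p x * (f a - m)^2 + 2 * (f a - m) * (p x * (F f x - n * m)) + p x * (F f x - n*m)^2))"
    unfolding sum_words_Suc e by (intro sum.cong refl) (simp add: power2_eq_square algebra_simps)
  also have "\<dots> = (\<Sum>a\<in>{1..L}. Q a * ((\<Sum>x\<in>W n. p x) * (f a - m)^2 + 2 * (f a - m) * (\<Sum>x\<in>W n. p x * (F f x - n * m)) + (\<Sum>x\<in>W n. p x * (F f x - n*m)^2)))"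
    by (simp add: sum.distrib sum_distrib_left[symmetric] sum_distrib_right[symmetric])
  also have "\<dots> = (\<Sum>a\<in>{1..L}. Q a * (f a - m)^2 + Q a * (n * var f))"
    using Suc centered_F[where n=n and f=f] by (simp add: sum_p m_def algebra_simps)
  also have "\<dots> = (\<Sum>a\<in>{1..L}. Q a * (f a - m)^2) + (\<Sum>a\<in>{1..L}. Q a) * (n * var f)"
    by (simp add: sum.distrib flip: sum_distrib_right)
  also have "\<dots> = Suc n * var f"
    by (simp add: pmf var_def m_def algebra_simps)
  finally show ?case by (simp add: m_def)
qed

lemma cheb_F:
  assumes R: "R > 0"
  shows "(\<Sum>x\<in>{x\<in>W n. R \<le> \<bar>F f x - n * mu f\<bar>}. p x) \<le> n * var f / R^2"
proof -
  have "(\<Sum>x\<in>{x\<in>W n. R \<le> \<bar>F f x - n * mu f\<bar>}. p x)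
      \<le> (\<Sum>x\<in>{x\<in>W n. R \<le> \<bar>F f x - n * mu f\<bar>}. p x * (F f x - n * mu f)^2 / R^2)"
  proof (intro sum_mono)
    fix x assume x: "x \<in> {x\<in>W n. R \<le> \<bar>F f x - n * mu f\<bar>}"
    then have "R^2 \<le> (F f x - n * mu f)^2"
      using R by (metis (no_types, lifting) abs_le_square_iff abs_of_pos mem_Collect_eq)
    then have "1 \<le> (F f x - n * mu f)^2 / R^2" using R by simp
    then show "p x \<le> p x * (F f x - n * mu f)^2 / R^2"
      using p_pos[of x n] x by (metis (no_types, lifting) mem_Collect_eq mult_le_cancel_left1 order_less_imp_not_less times_divide_eq_right)
  qed
  also have "\<dots> \<le> (\<Sum>x\<in>W n. p x * (F f x - n * mu f)^2 / R^2)"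
    by (intro sum_mono2) (auto simp: finite_words intro!: divide_nonneg_pos mult_nonneg_nonneg less_imp_le[OF p_pos] R)
  also have "\<dots> = n * var f / R^2"
    by (simp add: sum_divide_distrib[symmetric] second_F)
  finally show ?thesis .
qed

end

lemma sum_pow2_le: "(\<Sum>k\<in>{1..N}. (2::real)^k) \<le> 2^(Suc N)"
  by (induction N) (auto simp: atLeastAtMostSuc_conv)

context dm begin

lemma Dcode_eq:
  assumes S: "S \<subseteq> W n" "S \<noteq> {}"
  shows "Dcode L Q n S = (\<Sum>x\<in>S. sc x) / card S - log 2 (card S)"
proof -
  have fin: "finite S" using S finite_words finite_subset by blast
  then have M: "card S > 0" using S by auto
  have set: "{x\<in>W n. unif_set S x > 0} = S" using S M by (auto simp: unif_set_def)
  have "Dcode L Q n S = (\<Sum>x\<in>S. (1 / card S) * (sc x - log 2 (card S)))"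
    unfolding Dcode_def divergence_def set
  proof (intro sum.cong refl)
    fix x assume x: "x \<in> S"
    then have px: "0 < p x" using S p_pos by auto
    have "log 2 ((1 / card S) / iid Q x) = log 2 (1 / card S) - log 2 (p x)"
      using px M by (simp add: p_def log_divide log_mult)
    also have "\<dots> = sc x - log 2 (card S)" using M by (simp add: sc_def log_divide)
    finally show "unif_set S x * log 2 (unif_set S x / iid Q x) = 1 / real (card S) * (sc x - log 2 (real (card S)))"
      using x by (simp add: unif_set_def)
  qed
  also have "\<dots> = (\<Sum>x\<in>S. sc x) / card S - log 2 (card S)"
    using M by (simp add: sum_distrib_left[symmetric] sum_subtractf diff_divide_distrib sum_divide_distrib)
  finally show ?thesis .
qed

lemma count_le_mass:
  assumes T: "T \<subseteq> W n" and sc: "\<And>x. x \<in> T \<Longrightarrow> sc x < \<tau>"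
  shows "real (card T) \<le> 2 powr \<tau> * (\<Sum>x\<in>T. p x)"
proof -
  have fin: "finite T" using T finite_words finite_subset by blast
  have "real (card T) = (\<Sum>x\<in>T. 1)" by simp
  also have "\<dots> \<le> (\<Sum>x\<in>T. 2 powr \<tau> * p x)"
  proof (intro sum_mono)
    fix x assume x: "x \<in> T"
    have "2 powr \<tau> * p x = 2 powr \<tau> * 2 powr (- sc x)" using p_eq T x by auto
    also have "\<dots> = 2 powr (\<tau> - sc x)" by (simp add: powr_add[symmetric])
    also have "\<dots> \<ge> 1" using sc[OF x] by (intro ge_one_powr_ge_zero) auto
    finally show "1 \<le> 2 powr \<tau> * p x" .
  qed
  also have "\<dots> = 2 powr \<tau> * (\<Sum>x\<in>T. p x)" by (simp add: sum_distrib_left)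
  finally show ?thesis .
qed

lemma mass_le_count:
  assumes T: "T \<subseteq> W n" and sc: "\<And>x. x \<in> T \<Longrightarrow> t \<le> sc x"
  shows "(\<Sum>x\<in>T. p x) \<le> real (card T) * 2 powr (- t)"
proof -
  have "(\<Sum>x\<in>T. p x) \<le> (\<Sum>x\<in>T. 2 powr (- t))"
  proof (intro sum_mono)
    fix x assume x: "x \<in> T"
    show "p x \<le> 2 powr (- t)" using p_eq T x sc[OF x] by auto
  qed
  then show ?thesis by simp
qed

lemma sc_layer: "0 \<le> s \<Longrightarrow> (\<Sum>k\<in>{1..N}. if real k \<le> s then 1 else 0) \<le> (s::real)"
proof -
  assume s: "0 \<le> s"
  have "(\<Sum>k\<in>{1..N}. if real k \<le> s then 1 else 0) = real (card ({1..N} \<inter> {k. real k \<le> s}))"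
    by (simp add: sum.If_cases)
  also have "card ({1..N} \<inter> {k. real k \<le> s}) \<le> card {1..nat \<lfloor>s\<rfloor>}"
    by (intro card_mono) (auto simp: le_nat_floor)
  also have "real (card {1..nat \<lfloor>s\<rfloor>}) \<le> s" using s by simp
  finally show ?thesis by simp
qed

lemma layer_cake:
  fixes N :: nat and G :: "nat \<Rightarrow> real"
  assumes S: "S \<subseteq> W n"
    and G: "\<And>k. 1 \<le> k \<Longrightarrow> k \<le> N \<Longrightarrow> real (card {x\<in>S. sc x < real k}) \<le> G k"
  shows "(\<Sum>x\<in>S. sc x) \<ge> (\<Sum>k\<in>{1..N}. real (card S) - G k)"
proof -
  have fin: "finite S" using S finite_words finite_subset by blast
  have "(\<Sum>k\<in>{1..N}. real (card S) - G k) \<le> (\<Sum>k\<in>{1..N}. real (card {x\<in>S. real k \<le> sc x}))"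
  proof (intro sum_mono)
    fix k assume k: "k \<in> {1..N}"
    have "S = {x\<in>S. real k \<le> sc x} \<union> {x\<in>S. sc x < real k}" by auto
    then have "card S \<le> card {x\<in>S. real k \<le> sc x} + card {x\<in>S. sc x < real k}"
      by (metis card_Un_le)
    then show "real (card S) - G k \<le> real (card {x\<in>S. real k \<le> sc x})"
      using G[of k] k by auto
  qed
  also have "\<dots> = (\<Sum>k\<in>{1..N}. \<Sum>x\<in>S. if real k \<le> sc x then 1 else 0)"
    using fin by (simp add: sum.If_cases Int_def conj_commute)
  also have "\<dots> = (\<Sum>x\<in>S. \<Sum>k\<in>{1..N}. if real k \<le> sc x then 1 else 0)"
    by (rule sum.swap)
  also have "\<dots> \<le> (\<Sum>x\<in>S. sc x)"
    by (intro sum_mono sc_layer) (use S sc_nonneg in auto)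
  finally show ?thesis .
qed

lemma Dcode_ge_neglog:
  assumes S: "S \<subseteq> W n" "S \<noteq> {}"
  shows "Dcode L Q n S \<ge> - log 2 (card S)"
proof -
  have "(\<Sum>x\<in>S. sc x) \<ge> 0" by (intro sum_nonneg) (use S sc_nonneg in auto)
  then show ?thesis using Dcode_eq[OF S] by simp
qed

lemma LC2:
  assumes S: "S \<subseteq> W n" "S \<noteq> {}" and eta: "\<eta> > 0" and B: "B \<ge> 0"
    and hyp: "\<And>k::nat. 1 \<le> k \<Longrightarrow> real k \<le> log 2 (card S / \<eta>) \<Longrightarrow>
                real (card {x\<in>S. sc x < real k}) \<le> B + \<eta> * 2^k"
  shows "Dcode L Q n S \<ge> - log 2 \<eta> - 3 - max 0 (log 2 (card S / \<eta>)) * B / card S"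
proof -
  define M where "M = real (card S)"
  have fin: "finite S" using S finite_words finite_subset by blast
  then have M: "M \<ge> 1" using S by (auto simp: M_def Suc_le_eq)
  have extra: "max 0 (log 2 (card S / \<eta>)) * B / card S \<ge> 0"
    using B M by (simp add: M_def)
  show ?thesis
  proof (cases "M < \<eta>")
    case True
    have "- log 2 \<eta> \<le> - log 2 M" using True M by simp
    then show ?thesis using Dcode_ge_neglog[OF S] extra by (simp add: M_def)
  next
    case False
    define l where "l = log 2 (M / \<eta>)"
    have l0: "l \<ge> 0" using False eta by (simp add: l_def)
    define N where "N = nat \<lfloor>l\<rfloor>"
    have rN: "real N = of_int \<lfloor>l\<rfloor>" using l0 by (simp add: N_def)
    have N1: "real N \<le> l" "real N > l - 1" unfolding rN by linarith+
    have "(2::real)^N = 2 powr (real N)" by (simp add: powr_realpow)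
    also have "\<dots> \<le> 2 powr l" using N1 by simp
    also have "\<dots> = M / \<eta>" using M eta by (simp add: l_def)
    finally have N2: "(2::real)^N \<le> M / \<eta>" .
    have lc: "(\<Sum>x\<in>S. sc x) \<ge> (\<Sum>k\<in>{1..N}. M - (B + \<eta> * 2^k))"
      unfolding M_def
    proof (rule layer_cake[OF S(1)])
      fix k assume "1 \<le> k" "k \<le> N"
      then show "real (card {x\<in>S. sc x < real k}) \<le> B + \<eta> * 2^k"
        using hyp N1 by (simp add: l_def M_def)
    qed
    have e1: "(\<Sum>k\<in>{1..N}. M - (B + \<eta> * 2^k)) = N * (M - B) - \<eta> * (\<Sum>k\<in>{1..N}. 2^k)"
      by (simp add: sum_subtractf sum.distrib sum_distrib_left algebra_simps)
    have e2: "\<eta> * (\<Sum>k\<in>{1..N}. 2^k) \<le> \<eta> * 2^(Suc N)"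
      using eta sum_pow2_le[of N] by (intro mult_left_mono) auto
    have e3: "\<eta> * 2^(Suc N) \<le> 2 * M" using N2 eta by (simp add: field_simps)
    have "(\<Sum>x\<in>S. sc x) \<ge> N * (M - B) - 2 * M" using lc e1 e2 e3 by linarith
    then have "(\<Sum>x\<in>S. sc x) / M \<ge> (N * (M - B) - 2 * M) / M"
      using M by (intro divide_right_mono) auto
    moreover have "(N * (M - B) - 2 * M) / M = N - N * B / M - 2"
      using M by (simp add: field_simps)
    ultimately have avg: "(\<Sum>x\<in>S. sc x) / M \<ge> N - N * B / M - 2" by simp
    have "N * B / M \<le> l * B / M" using N1 B M by (intro divide_right_mono mult_right_mono) auto
    then have "(\<Sum>x\<in>S. sc x) / M \<ge> l - 3 - l * B / M" using avg N1 by linarith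
    moreover have "l = log 2 M - log 2 \<eta>" using M eta by (simp add: l_def log_divide)
    ultimately have "Dcode L Q n S \<ge> - log 2 \<eta> - 3 - l * B / M"
      using Dcode_eq[OF S] by (simp add: M_def)
    then show ?thesis using l0 by (simp add: l_def M_def)
  qed
qed

end

context dm begin

lemma Dstar_le:
  assumes S: "S \<subseteq> W n" "S \<noteq> {}"
  shows "Dstar L Q n \<le> Dcode L Q n S"
proof -
  have "{Dcode L Q n S | S. S \<noteq> {} \<and> S \<subseteq> W n} \<subseteq> (\<lambda>S. Dcode L Q n S) ` Pow (W n)" by auto
  then have "finite {Dcode L Q n S | S. S \<noteq> {} \<and> S \<subseteq> W n}"
    using finite_words by (meson finite_Pow_iff finite_imageI finite_subset)
  then show ?thesis unfolding Dstar_def using S by (intro Min_le) auto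
qed

lemma Dstar_attained:
  assumes L: "L \<ge> 1"
  shows "\<exists>S. S \<subseteq> W n \<and> S \<noteq> {} \<and> Dstar L Q n = Dcode L Q n S"
proof -
  have "{Dcode L Q n S | S. S \<noteq> {} \<and> S \<subseteq> W n} \<subseteq> (\<lambda>S. Dcode L Q n S) ` Pow (W n)" by auto
  then have fin: "finite {Dcode L Q n S | S. S \<noteq> {} \<and> S \<subseteq> W n}"
    using finite_words by (meson finite_Pow_iff finite_imageI finite_subset)
  have "replicate n 1 \<in> W n" using L by (auto simp: words_def)
  then have ne: "{Dcode L Q n S | S. S \<noteq> {} \<and> S \<subseteq> W n} \<noteq> {}" by blast
  have "Dstar L Q n \<in> {Dcode L Q n S | S. S \<noteq> {} \<and> S \<subseteq> W n}"
    unfolding Dstar_def using Min_in[OF fin ne] .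
  then show ?thesis by blast
qed

lemma Dstar_ge:
  assumes L: "L \<ge> 1" and b: "\<And>S. S \<subseteq> W n \<Longrightarrow> S \<noteq> {} \<Longrightarrow> b \<le> Dcode L Q n S"
  shows "b \<le> Dstar L Q n"
proof -
  obtain S where "S \<subseteq> W n" "S \<noteq> {}" "Dstar L Q n = Dcode L Q n S"
    using Dstar_attained[OF L, of n] by blast
  then show ?thesis using b by simp
qed

lemma upper_exists:
  assumes n: "n \<ge> 1"
  shows "\<exists>S. S \<subseteq> W n \<and> S \<noteq> {} \<and>
     Dcode L Q n S \<le> log 2 n / 2 + (1 + log 2 (2 * (2 * sqrt (2 * var cc) + 3)))"
proof -
  define V where "V = var cc"
  define H where "H = mu cc"
  have V0: "V \<ge> 0" unfolding V_def var_def
    using pos by (intro sum_nonneg mult_nonneg_nonneg) (auto intro: less_imp_le)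
  define R where "R = sqrt (2 * n * V) + 1"
  have R0: "R \<ge> 1" using V0 by (simp add: R_def)
  have "R^2 \<ge> (sqrt (2 * n * V))^2" unfolding R_def by (intro power_mono) (use V0 in auto)
  then have R2: "R^2 \<ge> 2 * n * V" using V0 by simp
  have cheb: "(\<Sum>x\<in>{x\<in>W n. R \<le> \<bar>F cc x - n * H\<bar>}. p x) \<le> 1/2"
  proof -
    have "(\<Sum>x\<in>{x\<in>W n. R \<le> \<bar>F cc x - n * H\<bar>}. p x) \<le> n * V / R^2"
      using cheb_F[of R n cc] R0 by (simp add: V_def H_def)
    also have "\<dots> \<le> 1/2" using R2 R0 by (simp add: field_simps)
    finally show ?thesis .
  qed
  define G where "G = {x\<in>W n. \<bar>sc x - n * H\<bar> < R}"
  have split: "W n = G \<union> {x\<in>W n. R \<le> \<bar>F cc x - n * H\<bar>}"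
    using sc_F by (auto simp: G_def)
  have "1 = (\<Sum>x\<in>W n. p x)" using sum_p by simp
  also have "\<dots> \<le> (\<Sum>x\<in>G. p x) + (\<Sum>x\<in>{x\<in>W n. R \<le> \<bar>F cc x - n * H\<bar>}. p x)"
  proof -
    have "(\<Sum>x\<in>W n. p x) \<le> (\<Sum>x\<in>G \<union> {x\<in>W n. R \<le> \<bar>F cc x - n * H\<bar>}. p x)"
      using split by simp
    also have "\<dots> \<le> (\<Sum>x\<in>G. p x) + (\<Sum>x\<in>{x\<in>W n. R \<le> \<bar>F cc x - n * H\<bar>}. p x)"
    proof -
      have fG: "finite G" by (simp add: G_def finite_words)
      have fB: "finite {x\<in>W n. R \<le> \<bar>F cc x - n * H\<bar>}" by (simp add: finite_words)
      have "(\<Sum>x\<in>G \<inter> {x\<in>W n. R \<le> \<bar>F cc x - n * H\<bar>}. p x) \<ge> 0"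
        by (intro sum_nonneg) (auto simp: G_def intro: less_imp_le p_pos)
      then show ?thesis using sum_Un[OF fG fB, of p] by linarith
    qed
    finally show ?thesis .
  qed
  finally have massG: "(\<Sum>x\<in>G. p x) \<ge> 1/2" using cheb by linarith
  define J where "J = nat \<lceil>2 * R\<rceil>"
  have J1: "real J \<ge> 2 * R" unfolding J_def by linarith
  have J2: "real J \<le> 2 * R + 1" unfolding J_def using R0 by linarith
  define t where "t j = n * H - R + real j" for j :: nat
  define win where "win j = {x\<in>W n. t j \<le> sc x \<and> sc x < t j + 1}" for j
  have winW: "win j \<subseteq> W n" for j by (auto simp: win_def)
  have cover: "(\<Sum>x\<in>G. p x) \<le> (\<Sum>j<J. \<Sum>x\<in>win j. p x)"
  proof -
    have "(\<Sum>x\<in>W n. p x * (if x \<in> G then 1 else 0)) = (\<Sum>x\<in>W n. if x \<in> G then p x else 0)"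
      by (intro sum.cong) auto
    also have "\<dots> = (\<Sum>x\<in>{x\<in>W n. x \<in> G}. p x)"
      by (rule sum.inter_filter[symmetric, OF finite_words])
    also have "{x\<in>W n. x \<in> G} = G" by (auto simp: G_def)
    finally have "(\<Sum>x\<in>G. p x) = (\<Sum>x\<in>W n. p x * (if x \<in> G then 1 else 0))" by simp
    also have "\<dots> \<le> (\<Sum>x\<in>W n. p x * (\<Sum>j<J. if x \<in> win j then 1 else 0))"
    proof (intro sum_mono mult_left_mono)
      fix x assume x: "x \<in> W n"
      show "0 \<le> p x" using p_pos[OF x] by simp
      show "(if x \<in> G then 1 else 0) \<le> (\<Sum>j<J. if x \<in> win j then 1 else (0::real))"
      proof (cases "x \<in> G")
        case True
        define j0 where "j0 = nat \<lfloor>sc x - n * H + R\<rfloor>"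
        have g: "\<bar>sc x - n * H\<bar> < R" using True by (simp add: G_def)
        have rj0: "real j0 = of_int \<lfloor>sc x - n * H + R\<rfloor>" using g unfolding j0_def by simp
        have "j0 < J"
        proof -
          have "real j0 < 2 * R" using rj0 g by linarith
          then show ?thesis using J1 by linarith
        qed
        moreover have "x \<in> win j0"
        proof -
          have fc: "of_int \<lfloor>sc x - n * H + R\<rfloor> \<le> sc x - n * H + R \<and> sc x - n * H + R < of_int (\<lfloor>sc x - n * H + R\<rfloor> + 1)"
            by (rule floor_correct)
          have "t j0 \<le> sc x" unfolding t_def using rj0 fc by linarith
          moreover have "sc x < t j0 + 1" unfolding t_def using rj0 fc by linarith
          ultimately show ?thesis using x by (simp add: win_def)
        qed
        ultimately have "(if x \<in> win j0 then 1 else (0::real)) \<le> (\<Sum>j<J. if x \<in> win j then 1 else 0)"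
          by (intro member_le_sum) auto
        then show ?thesis using True \<open>x \<in> win j0\<close> by simp
      qed (simp add: sum_nonneg)
    qed
    also have "\<dots> = (\<Sum>x\<in>W n. \<Sum>j<J. p x * (if x \<in> win j then 1 else 0))"
      by (simp only: sum_distrib_left)
    also have "\<dots> = (\<Sum>j<J. \<Sum>x\<in>W n. p x * (if x \<in> win j then 1 else 0))"
      by (rule sum.swap)
    also have "\<dots> = (\<Sum>j<J. \<Sum>x\<in>win j. p x)"
    proof (rule sum.cong[OF refl])
      fix j
      have "(\<Sum>x\<in>W n. p x * (if x \<in> win j then 1 else 0)) = (\<Sum>x\<in>W n. if x \<in> win j then p x else 0)"
        by (intro sum.cong) auto
      also have "\<dots> = (\<Sum>x\<in>{x\<in>W n. x \<in> win j}. p x)"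
        by (rule sum.inter_filter[symmetric, OF finite_words])
      also have "{x\<in>W n. x \<in> win j} = win j" by (auto simp: win_def)
      finally show "(\<Sum>x\<in>W n. p x * (if x \<in> win j then 1 else 0)) = (\<Sum>x\<in>win j. p x)" by simp
    qed
    finally show ?thesis .
  qed
  have Jpos: "J > 0" using J1 R0 by auto
  have "\<exists>j<J. (\<Sum>x\<in>win j. p x) \<ge> 1 / (2 * J)"
  proof (rule ccontr)
    assume "\<not> ?thesis"
    then have "\<forall>j<J. (\<Sum>x\<in>win j. p x) < 1 / (2 * J)" by (simp add: not_le)
    then have "(\<Sum>j<J. \<Sum>x\<in>win j. p x) < (\<Sum>j<J. 1 / (2 * real J))"
      using Jpos by (intro sum_strict_mono) auto
    also have "\<dots> = 1/2" using Jpos by simp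
    finally show False using cover massG by linarith
  qed
  then obtain j where j: "j < J" and jm: "(\<Sum>x\<in>win j. p x) \<ge> 1 / (2 * J)" by blast
  define S where "S = win j"
  define q where "q = (\<Sum>x\<in>S. p x)"
  have "1 / (2 * real J) > 0" using Jpos by simp
  then have q0: "q > 0" using jm unfolding q_def S_def by linarith
  have SW: "S \<subseteq> W n" by (simp add: S_def winW)
  have Sne: "S \<noteq> {}" using q0 by (auto simp: q_def)
  have finS: "finite S" using SW finite_words finite_subset by blast
  define M where "M = real (card S)"
  have M0: "M > 0" using finS Sne by (simp add: M_def card_gt_0_iff)
  have "q \<le> M * 2 powr (- t j)"
    unfolding q_def M_def by (rule mass_le_count[OF SW]) (auto simp: S_def win_def)
  then have "log 2 q \<le> log 2 (M * 2 powr (- t j))" using q0 by simp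
  also have "\<dots> = log 2 M - t j" using M0 by (simp add: log_mult)
  finally have logM: "log 2 M \<ge> log 2 q + t j" by simp
  have "(\<Sum>x\<in>S. sc x) \<le> (\<Sum>x\<in>S. t j + 1)"
    by (intro sum_mono) (auto simp: S_def win_def)
  then have "(\<Sum>x\<in>S. sc x) / M \<le> t j + 1" using M0 by (simp add: M_def field_simps)
  then have D: "Dcode L Q n S \<le> 1 - log 2 q"
    using Dcode_eq[OF SW Sne] logM by (simp add: M_def)
  have "- log 2 q \<le> - log 2 (1 / (2 * J))"
    using q0 jm Jpos by (simp add: q_def S_def)
  also have "\<dots> = log 2 (2 * J)" using Jpos by (simp add: log_divide)
  also have "\<dots> \<le> log 2 ((2 * (2 * sqrt (2 * V) + 3)) * sqrt n)"
  proof -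
    have sn: "sqrt (real n) \<ge> 1" using n by simp
    have "sqrt (2 * n * V) = sqrt (2 * V) * sqrt n" by (simp add: real_sqrt_mult mult_ac)
    then have "real J \<le> 2 * (sqrt (2 * V) * sqrt n) + 3" using J2 R_def by simp
    also have "\<dots> \<le> (2 * sqrt (2 * V) + 3) * sqrt n" using sn by (simp add: algebra_simps)
    finally have "2 * real J \<le> (2 * (2 * sqrt (2 * V) + 3)) * sqrt n" by (simp only: mult.assoc)
    moreover have "0 < 2 * real J" using Jpos by simp
    ultimately show ?thesis by (subst log_le_cancel_iff) auto
  qed
  also have "\<dots> = log 2 (2 * (2 * sqrt (2 * V) + 3)) + log 2 n / 2"
  proof -
    have "sqrt (2 * V) \<ge> 0" using V0 by simp
    then have a: "2 * (2 * sqrt (2 * V) + 3) > 0" by (intro mult_pos_pos add_nonneg_pos) auto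
    have b: "sqrt (real n) > 0" using n by simp
    have "log 2 (sqrt (real n)) = log 2 n / 2" unfolding sqrt_def by (subst log_root) auto
    then show ?thesis using a b by (simp add: log_mult)
  qed
  finally have "Dcode L Q n S \<le> log 2 n / 2 + (1 + log 2 (2 * (2 * sqrt (2 * var cc) + 3)))"
    using D by (simp add: V_def)
  then show ?thesis using SW Sne by blast
qed

lemma upper_Dstar:
  assumes n: "n \<ge> 1"
  shows "Dstar L Q n \<le> log 2 n / 2 + (1 + log 2 (2 * (2 * sqrt (2 * var cc) + 3)))"
proof -
  obtain S where S: "S \<subseteq> W n" "S \<noteq> {}"
    "Dcode L Q n S \<le> log 2 n / 2 + (1 + log 2 (2 * (2 * sqrt (2 * var cc) + 3)))"
    using upper_exists[OF n] by blast
  show ?thesis using Dstar_le[OF S(1,2)] S(3) by linarith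
qed

end

definition bn :: "nat \<Rightarrow> real \<Rightarrow> nat \<Rightarrow> real" where
  "bn m r k = real (m choose k) * r^k * (1-r)^(m-k)"

lemma bn_nonneg: "0 \<le> r \<Longrightarrow> r \<le> 1 \<Longrightarrow> 0 \<le> bn m r k"
  by (simp add: bn_def)

lemma bn_sum: "(\<Sum>k\<le>m. bn m r k) = 1"
  using binomial_ring[of r "1-r" m] by (simp add: bn_def)

lemma bn_le1:
  assumes "0 \<le> r" "r \<le> 1" "k \<le> m"
  shows "bn m r k \<le> 1"
proof -
  have "bn m r k \<le> (\<Sum>k\<le>m. bn m r k)"
    by (rule member_le_sum) (use assms bn_nonneg in auto)
  then show ?thesis using bn_sum by simp
qed

lemma bn_ratio:
  fixes r :: real
  assumes j: "j < m"
  shows "bn m r j * (real (m - j) * r) = bn m r (Suc j) * (real (Suc j) * (1 - r))"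
proof -
  have c: "(m - j) * (m choose j) = Suc j * (m choose Suc j)"
    using binomial_absorb_comp[of m j] binomial_absorption[of j m] by simp
  have c': "real (m - j) * real (m choose j) = real (Suc j) * real (m choose Suc j)"
    using c by (metis of_nat_mult)
  have e: "m - j = Suc (m - Suc j)" using j by simp
  have "bn m r j * (real (m - j) * r) = (real (m - j) * real (m choose j)) * r^(Suc j) * (1-r)^(m - Suc j) * (1 - r)"
    unfolding bn_def e by (simp add: algebra_simps)
  also have "\<dots> = bn m r (Suc j) * (Suc j * (1 - r))"
    unfolding c' bn_def by (simp add: algebra_simps)
  finally show ?thesis .
qed

lemma bn_symm: "k \<le> m \<Longrightarrow> bn m r k = bn m (1 - r) (m - k)"
  unfolding bn_def by (simp add: binomial_symmetric[symmetric] mult_ac)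

lemma ratio_ineq:
  fixes r s2 T i x :: real
  assumes r: "0 < r" "r < 1" and s2: "s2 = m * r * (1 - r)" and x: "x = (T + 1) / s2"
    and x1: "x \<le> 1" and x0: "0 \<le> x" and T: "0 \<le> T" and i: "i \<ge> m * r - T" and s2pos: "s2 > 0"
  shows "i * (1 - r) \<ge> (1 - x) * ((m - i + 1) * r)"
proof -
  define t where "t = m * r - i"
  have ti: "i = m * r - t" using t_def by simp
  have tT: "t \<le> T" using i t_def by simp
  have e1: "i * (1 - r) = s2 - t * (1 - r)" unfolding ti s2 by (simp add: algebra_simps)
  have e2: "(m - i + 1) * r = s2 + (t + 1) * r" unfolding ti s2 by (simp add: algebra_simps)
  have xs: "x * s2 = T + 1" using x s2pos by simp
  have key: "(T + 1 - t - r) + x * ((t + 1) * r) \<ge> 0"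
  proof (cases "t + 1 \<ge> 0")
    case True
    then have "x * ((t + 1) * r) \<ge> 0" using x0 r by simp
    then show ?thesis using tT r by linarith
  next
    case False
    have "x * ((t + 1) * r) \<ge> 1 * ((t + 1) * r)"
      using False x1 r by (intro mult_right_mono_neg) (auto intro: mult_nonpos_nonneg)
    moreover have "T + 1 - t - r + (t + 1) * r = T + 1 - t * (1 - r)" by (simp add: algebra_simps)
    moreover have "t * (1 - r) \<le> 0" using False r by (simp add: mult_nonpos_nonneg)
    ultimately show ?thesis using T by linarith
  qed
  have "(1 - x) * ((m - i + 1) * r) = s2 + (t + 1) * r - x * s2 - x * ((t + 1) * r)"
    unfolding e2 by (simp add: algebra_simps)
  also have "\<dots> = s2 + (t + 1) * r - (T + 1) - x * ((t + 1) * r)" using xs by simp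
  also have "\<dots> \<le> s2 - t * (1 - r)" using key by (simp add: algebra_simps)
  finally show ?thesis using e1 by simp
qed

lemma bn_bound_upper:
  assumes r: "0 < r" "r < 1" and m: "m \<ge> 1" and k: "m * r \<le> real k" "k \<le> m"
  shows "bn m r k \<le> 4 / sqrt (m * r * (1 - r))"
proof -
  define s2 where "s2 = m * r * (1 - r)"
  define s where "s = sqrt s2"
  have s2pos: "s2 > 0" using r m by (simp add: s2_def)
  have spos: "s > 0" using s2pos by (simp add: s_def)
  have ss: "s * s = s2" using s2pos by (simp add: s_def)
  have b1: "bn m r k \<le> 1" using bn_le1 r k by auto
  show ?thesis
  proof (cases "s < 2")
    case True
    have "1 \<le> 4 / s" using True spos by (simp add: field_simps)
    then show ?thesis using b1 by (simp add: s_def s2_def)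
  next
    case False
    then have s2': "s \<ge> 2" by simp
    define T where "T = nat \<lfloor>s / 2\<rfloor>"
    have rT: "real T = of_int \<lfloor>s / 2\<rfloor>" using spos by (simp add: T_def)
    have fc: "of_int \<lfloor>s / 2\<rfloor> \<le> s / 2 \<and> s / 2 < of_int (\<lfloor>s / 2\<rfloor> + 1)" by (rule floor_correct)
    have T1: "real T \<le> s / 2" using rT fc by linarith
    have T2: "real T + 1 > s / 2" using rT fc by linarith
    define x where "x = (real T + 1) / s2"
    have "real T + 1 \<le> s" using T1 s2' by linarith
    also have ss2: "s \<le> s2"
    proof -
      have "s * 1 \<le> s * s" using s2' spos by (intro mult_left_mono) auto
      then show ?thesis using ss by simp
    qed
    finally have Ts2: "real T + 1 \<le> s2" .
    have x1: "x \<le> 1" using Ts2 s2pos by (simp add: x_def)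
    have x0: "0 \<le> x" using s2pos by (simp add: x_def)
    have "real T * (real T + 1) \<le> (s / 2) * s"
      using T1 \<open>real T + 1 \<le> s\<close> by (intro mult_mono) auto
    then have Tx: "real T * x \<le> 1 / 2" using s2pos ss by (simp add: x_def field_simps)
    have mr: "m * r \<ge> s2" using r by (simp add: s2_def mult_left_le)
    have kT: "real T \<le> real k"
    proof -
      have "real T \<le> s" using T1 spos by linarith
      also have "s \<le> s2" by (rule ss2)
      finally show ?thesis using mr k by linarith
    qed
    have step: "bn m r j \<ge> bn m r (Suc j) * (1 - x)"
      if j: "Suc j \<le> k" and ji: "real (Suc j) \<ge> m * r - T" for j
    proof -
      have jm: "j < m" using j k by simp
      have pos: "(m - j) * r > 0" using jm r by simp
      have rat: "bn m r j * (real (m - j) * r) = bn m r (Suc j) * (real (Suc j) * (1 - r))"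
        using bn_ratio[OF jm] by simp
      have mj: "real (m - j) = real m - real (Suc j) + 1" using jm by simp
      have ineq: "real (Suc j) * (1 - r) \<ge> (1 - x) * (real (m - j) * r)"
        unfolding mj by (rule ratio_ineq[OF r s2_def x_def x1 x0]) (use ji s2pos in auto)
      have bnn: "bn m r (Suc j) \<ge> 0" using bn_nonneg r by simp
      have "bn m r (Suc j) * (1 - x) * (real (m - j) * r) \<le> bn m r (Suc j) * (real (Suc j) * (1 - r))"
        using mult_left_mono[OF ineq bnn] by (simp add: mult_ac)
      also have "\<dots> = bn m r j * (real (m - j) * r)" using rat by simp
      finally have h: "bn m r (Suc j) * (1 - x) * (real (m - j) * r) \<le> bn m r j * (real (m - j) * r)" .
      show ?thesis by (rule mult_right_le_imp_le[OF h pos])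
    qed
    have ind: "j \<le> T \<longrightarrow> bn m r (k - j) \<ge> bn m r k * (1 - j * x)" for j
    proof (induction j)
      case 0 then show ?case by simp
    next
      case (Suc j)
      show ?case
      proof
        assume jT: "Suc j \<le> T"
        have ih: "bn m r (k - j) \<ge> bn m r k * (1 - j * x)" using Suc jT by simp
        have kj: "Suc (k - Suc j) = k - j" using jT kT by linarith
        have "bn m r (k - Suc j) \<ge> bn m r (Suc (k - Suc j)) * (1 - x)"
        proof (rule step)
          show "Suc (k - Suc j) \<le> k" using kj by simp
          have "real (Suc (k - Suc j)) = real k - real j" using kj jT kT by (simp add: of_nat_diff)
          then show "real (Suc (k - Suc j)) \<ge> m * r - T" using k jT by simp
        qed
        then have a: "bn m r (k - Suc j) \<ge> bn m r (k - j) * (1 - x)" using kj by simp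
        have "bn m r (k - j) * (1 - x) \<ge> bn m r k * (1 - j * x) * (1 - x)"
          using ih x1 by (intro mult_right_mono) auto
        moreover have "bn m r k * (1 - j * x) * (1 - x) \<ge> bn m r k * (1 - Suc j * x)"
        proof -
          have "(1 - j * x) * (1 - x) \<ge> 1 - Suc j * x" using x0 by (simp add: algebra_simps)
          then show ?thesis using bn_nonneg[of r m k] r by (simp add: mult_left_mono mult.assoc)
        qed
        ultimately show "bn m r (k - Suc j) \<ge> bn m r k * (1 - Suc j * x)" using a by linarith
      qed
    qed
    have half: "bn m r (k - j) \<ge> bn m r k / 2" if "j \<le> T" for j
    proof -
      have "real j * x \<le> real T * x" using that x0 by (simp add: mult_right_mono)
      then have "1 - j * x \<ge> 1 / 2" using Tx by linarith
      then have "bn m r k * (1 - j * x) \<ge> bn m r k * (1/2)"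
        using bn_nonneg[of r m k] r by (intro mult_left_mono) auto
      then show ?thesis using ind[of j] that by simp
    qed
    have "(\<Sum>j\<le>T. bn m r k / 2) \<le> (\<Sum>j\<le>T. bn m r (k - j))"
      by (intro sum_mono half) auto
    also have "\<dots> = (\<Sum>i\<in>(\<lambda>j. k - j) ` {..T}. bn m r i)"
    proof -
      have "inj_on (\<lambda>j. k - j) {..T}" using kT by (auto simp: inj_on_def)
      then show ?thesis by (simp add: sum.reindex)
    qed
    also have "\<dots> \<le> (\<Sum>i\<le>m. bn m r i)"
      by (intro sum_mono2) (use k r bn_nonneg in auto)
    also have "\<dots> = 1" by (rule bn_sum)
    finally have "(real T + 1) * (bn m r k / 2) \<le> 1" by (simp add: add.commute)
    then have h2: "bn m r k * (real T + 1) \<le> 2" by (simp add: algebra_simps)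
    have Tp: "real T + 1 > 0" by simp
    have "bn m r k \<le> 2 / (real T + 1)" using h2 pos_le_divide_eq[OF Tp] by simp
    also have "\<dots> \<le> 2 / (s / 2)" using T2 spos by (intro divide_left_mono) auto
    also have "\<dots> = 4 / s" by simp
    finally show ?thesis by (simp add: s_def s2_def)
  qed
qed

lemma bn_bound:
  assumes r: "0 < r" "r < 1" and m: "m \<ge> 1" and k: "k \<le> m"
  shows "bn m r k \<le> 4 / sqrt (m * r * (1 - r))"
proof (cases "m * r \<le> real k")
  case True then show ?thesis using bn_bound_upper[OF r m True k] by simp
next
  case False
  have "m * (1 - r) \<le> real (m - k)" using False k by (simp add: of_nat_diff algebra_simps)
  then have "bn m (1 - r) (m - k) \<le> 4 / sqrt (m * (1 - r) * (1 - (1 - r)))"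
    using r m by (intro bn_bound_upper) auto
  then show ?thesis using bn_symm[OF k, of r] by (simp add: mult_ac)
qed

lemma bn_Suc_Suc: "bn (Suc m) r (Suc k) = r * bn m r k + (1 - r) * bn m r (Suc k)"
proof (cases "k < m")
  case True
  have e: "m - k = Suc (m - Suc k)" using True by simp
  have e2: "(1 - r) ^ (m - k) = (1 - r) * (1 - r) ^ (m - Suc k)" unfolding e by simp
  show ?thesis by (simp add: bn_def e2 algebra_simps)
next
  case False
  then have "m choose Suc k = 0" by simp
  then show ?thesis unfolding bn_def by (simp add: algebra_simps)
qed

lemma bn_Suc_0: "bn (Suc m) r 0 = (1 - r) * bn m r 0"
  by (simp add: bn_def)

lemma bn_big: "m < k \<Longrightarrow> bn m r k = 0"
  by (simp add: bn_def)

lemma binom_step: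
  "(\<Sum>k\<le>Suc m. bn (Suc m) r k * G k) = (\<Sum>k\<le>m. bn m r k * (r * G (Suc k) + (1 - r) * G k))"
proof -
  have s1: "(\<Sum>k\<le>m. bn (Suc m) r (Suc k) * G (Suc k))
      = (\<Sum>k\<le>m. r * (bn m r k * G (Suc k)) + (1 - r) * (bn m r (Suc k) * G (Suc k)))"
    by (intro sum.cong refl) (simp add: bn_Suc_Suc algebra_simps)
  have s2: "bn m r 0 * G 0 + (\<Sum>k\<le>m. bn m r (Suc k) * G (Suc k)) = (\<Sum>k\<le>m. bn m r k * G k)"
  proof -
    have "bn m r 0 * G 0 + (\<Sum>k\<le>m. bn m r (Suc k) * G (Suc k)) = (\<Sum>k\<le>Suc m. bn m r k * G k)"
      by (rule sum.atMost_Suc_shift[symmetric])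
    also have "\<dots> = (\<Sum>k\<le>m. bn m r k * G k)" by (simp add: bn_big)
    finally show ?thesis .
  qed
  have s3: "(\<Sum>k\<le>m. bn m r k * (r * G (Suc k) + (1 - r) * G k))
      = r * (\<Sum>k\<le>m. bn m r k * G (Suc k)) + (1 - r) * (\<Sum>k\<le>m. bn m r k * G k)"
  proof -
    have "(\<Sum>k\<le>m. bn m r k * (r * G (Suc k) + (1 - r) * G k))
      = (\<Sum>k\<le>m. r * (bn m r k * G (Suc k)) + (1 - r) * (bn m r k * G k))"
      by (intro sum.cong refl) (simp add: algebra_simps)
    then show ?thesis by (simp add: sum.distrib sum_distrib_left)
  qed
  have "(\<Sum>k\<le>Suc m. bn (Suc m) r k * G k) = bn (Suc m) r 0 * G 0 + (\<Sum>k\<le>m. bn (Suc m) r (Suc k) * G (Suc k))"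
    by (rule sum.atMost_Suc_shift)
  also have "\<dots> = (1 - r) * (bn m r 0 * G 0) + (r * (\<Sum>k\<le>m. bn m r k * G (Suc k)) + (1 - r) * (\<Sum>k\<le>m. bn m r (Suc k) * G (Suc k)))"
    unfolding s1 by (simp add: bn_Suc_0 sum.distrib sum_distrib_left)
  also have "\<dots> = r * (\<Sum>k\<le>m. bn m r k * G (Suc k)) + (1 - r) * (bn m r 0 * G 0 + (\<Sum>k\<le>m. bn m r (Suc k) * G (Suc k)))"
    by (simp add: algebra_simps)
  also have "\<dots> = r * (\<Sum>k\<le>m. bn m r k * G (Suc k)) + (1 - r) * (\<Sum>k\<le>m. bn m r k * G k)"
    unfolding s2 ..
  finally show ?thesis unfolding s3 .
qed

lemma sum_lin:
  fixes c A B :: "'a \<Rightarrow> real"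
  shows "(\<Sum>k\<in>K. c k * (\<alpha> * A k + \<beta> * B k)) = \<alpha> * (\<Sum>k\<in>K. c k * A k) + \<beta> * (\<Sum>k\<in>K. c k * B k)"
  by (simp add: distrib_left sum.distrib sum_distrib_left mult.left_commute)

lemma card_window:
  fixes \<delta> \<alpha> t :: real
  assumes d: "\<delta> \<noteq> 0" and K: "finite K" and win: "\<And>k. k \<in> K \<Longrightarrow> t \<le> \<alpha> - real k * \<delta> \<and> \<alpha> - real k * \<delta> < t + 1"
  shows "real (card K) \<le> 1 / \<bar>\<delta>\<bar> + 1"
proof (cases "K = {}")
  case True then show ?thesis by simp
next
  case False
  define k0 where "k0 = Min K"
  define k1 where "k1 = Max K"
  have k0: "k0 \<in> K" using K False by (simp add: k0_def)
  have k1: "k1 \<in> K" using K False by (simp add: k1_def)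
  have sub: "K \<subseteq> {k0..k1}" using K by (auto simp: k0_def k1_def)
  have le: "k0 \<le> k1" using sub k0 by auto
  have "\<bar>(\<alpha> - real k0 * \<delta>) - (\<alpha> - real k1 * \<delta>)\<bar> < 1" using win[OF k0] win[OF k1] by linarith
  then have "\<bar>(real k1 - real k0) * \<delta>\<bar> < 1" by (simp add: algebra_simps)
  then have "(real k1 - real k0) * \<bar>\<delta>\<bar> < 1" using le by (simp add: abs_mult)
  then have "real k1 - real k0 < 1 / \<bar>\<delta>\<bar>" using d by (simp add: field_simps)
  moreover have "card K \<le> card {k0..k1}" using sub by (intro card_mono) auto
  moreover have "real (card {k0..k1}) = real k1 - real k0 + 1" using le by simp
  ultimately show ?thesis by linarith
qed

locale dm2 = dm +
  fixes a b :: nat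
  assumes a: "a \<in> {1..L}" and b: "b \<in> {1..L}" and ab: "Q a \<noteq> Q b"
begin

definition qq where "qq = Q a + Q b"
definition pr where "pr = Q a / qq"
definition mm where "mm x = length (filter (\<lambda>z. z = a \<or> z = b) x)"
definition kk where "kk x = length (filter (\<lambda>z. z = a) x)"
definition uu where "uu x = prod_list (map Q (filter (\<lambda>z. z \<noteq> a \<and> z \<noteq> b) x))"

lemma a_ne_b: "a \<noteq> b" using ab by auto
lemma Qa: "Q a > 0" using pos a by auto
lemma Qb: "Q b > 0" using pos b by auto
lemma qq_pos: "qq > 0" using Qa Qb by (simp add: qq_def)
lemma pr_bounds: "0 < pr" "pr < 1"
  using Qa Qb by (auto simp: pr_def qq_def field_simps)
lemma Qa_eq: "Q a = qq * pr" using qq_pos by (simp add: pr_def)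
lemma Qb_eq: "Q b = qq * (1 - pr)" using qq_pos by (simp add: pr_def qq_def field_simps)

lemma mm_Cons: "mm (z#x) = (if z = a \<or> z = b then Suc (mm x) else mm x)" by (simp add: mm_def)
lemma kk_Cons: "kk (z#x) = (if z = a then Suc (kk x) else kk x)" by (simp add: kk_def)
lemma uu_Cons: "uu (z#x) = (if z = a \<or> z = b then uu x else Q z * uu x)" by (auto simp: uu_def)

lemma uu_Nil[simp]: "uu [] = 1" by (simp add: uu_def)

lemma kk_le_mm: "kk x \<le> mm x"
  by (induction x) (auto simp: mm_def kk_def)

lemma uu_pos: "set x \<subseteq> {1..L} \<Longrightarrow> uu x > 0"
  by (induction x) (use pos in \<open>auto simp: uu_Cons\<close>)

lemma p_split: "p x = uu x * Q a ^ kk x * Q b ^ (mm x - kk x)"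
proof (induction x)
  case Nil then show ?case by (simp add: uu_def kk_def mm_def)
next
  case (Cons z x)
  have le: "kk x \<le> mm x" by (rule kk_le_mm)
  show ?case
  proof (cases "z = a")
    case True
    then show ?thesis using Cons a_ne_b by (simp add: mm_Cons kk_Cons uu_Cons algebra_simps)
  next
    case False
    show ?thesis
    proof (cases "z = b")
      case True
      have "Suc (mm x) - kk x = Suc (mm x - kk x)" using le by simp
      then show ?thesis using Cons False True by (simp add: mm_Cons kk_Cons uu_Cons algebra_simps)
    next
      case False2: False
      then show ?thesis using Cons False by (simp add: mm_Cons kk_Cons uu_Cons algebra_simps)
    qed
  qed
qed

lemma CB:
  "(\<Sum>x\<in>W n. p x * h (uu x) (mm x) (kk x)) =
   (\<Sum>x\<in>W n. p x * (\<Sum>k\<le>mm x. bn (mm x) pr k * h (uu x) (mm x) k))"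
proof (induction n arbitrary: h)
  case 0
  show ?case by (simp add: words_0 mm_def kk_def bn_def)
next
  case (Suc n)
  define f where "f z = (\<Sum>x\<in>W n. p (z#x) * h (uu (z#x)) (mm (z#x)) (kk (z#x)))" for z
  define g where "g z = (\<Sum>x\<in>W n. p (z#x) * (\<Sum>k\<le>mm (z#x). bn (mm (z#x)) pr k * h (uu (z#x)) (mm (z#x)) k))" for z
  have rest: "f z = g z" if z: "z \<noteq> a" "z \<noteq> b" for z
  proof -
    have "f z = Q z * (\<Sum>x\<in>W n. p x * (\<lambda>u m k. h (Q z * u) m k) (uu x) (mm x) (kk x))"
      unfolding f_def using z by (simp add: mm_Cons kk_Cons uu_Cons sum_distrib_left mult_ac)
    also have "\<dots> = Q z * (\<Sum>x\<in>W n. p x * (\<Sum>k\<le>mm x. bn (mm x) pr k * (\<lambda>u m k. h (Q z * u) m k) (uu x) (mm x) k))"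
      using Suc.IH[of "\<lambda>u m k. h (Q z * u) m k"] by simp
    also have "\<dots> = g z"
      unfolding g_def using z by (simp add: mm_Cons kk_Cons uu_Cons sum_distrib_left mult_ac)
    finally show ?thesis .
  qed
  have fa: "f a = Q a * (\<Sum>x\<in>W n. p x * (\<Sum>k\<le>mm x. bn (mm x) pr k * h (uu x) (Suc (mm x)) (Suc k)))"
  proof -
    have "f a = Q a * (\<Sum>x\<in>W n. p x * (\<lambda>u m k. h u (Suc m) (Suc k)) (uu x) (mm x) (kk x))"
      unfolding f_def by (simp add: mm_Cons kk_Cons uu_Cons sum_distrib_left mult_ac)
    also have "\<dots> = Q a * (\<Sum>x\<in>W n. p x * (\<Sum>k\<le>mm x. bn (mm x) pr k * (\<lambda>u m k. h u (Suc m) (Suc k)) (uu x) (mm x) k))"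
      using Suc.IH[of "\<lambda>u m k. h u (Suc m) (Suc k)"] by simp
    finally show ?thesis by simp
  qed
  have fb: "f b = Q b * (\<Sum>x\<in>W n. p x * (\<Sum>k\<le>mm x. bn (mm x) pr k * h (uu x) (Suc (mm x)) k))"
  proof -
    have "f b = Q b * (\<Sum>x\<in>W n. p x * (\<lambda>u m k. h u (Suc m) k) (uu x) (mm x) (kk x))"
      unfolding f_def using a_ne_b by (simp add: mm_Cons kk_Cons uu_Cons sum_distrib_left mult_ac)
    also have "\<dots> = Q b * (\<Sum>x\<in>W n. p x * (\<Sum>k\<le>mm x. bn (mm x) pr k * (\<lambda>u m k. h u (Suc m) k) (uu x) (mm x) k))"
      using Suc.IH[of "\<lambda>u m k. h u (Suc m) k"] by simp
    finally show ?thesis by simp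
  qed
  have gab: "g a + g b = f a + f b"
  proof -
    define \<Phi> where "\<Phi> = (\<Sum>x\<in>W n. p x * (\<Sum>k\<le>Suc (mm x). bn (Suc (mm x)) pr k * h (uu x) (Suc (mm x)) k))"
    have ga: "g a = Q a * \<Phi>" unfolding g_def \<Phi>_def
      by (simp add: mm_Cons uu_Cons sum_distrib_left mult.assoc del: sum.atMost_Suc)
    have gb: "g b = Q b * \<Phi>" unfolding g_def \<Phi>_def
      by (simp add: mm_Cons uu_Cons sum_distrib_left mult.assoc del: sum.atMost_Suc)
    have "g a + g b = (Q a + Q b) * (\<Sum>x\<in>W n. p x * (\<Sum>k\<le>Suc (mm x). bn (Suc (mm x)) pr k * h (uu x) (Suc (mm x)) k))"
      unfolding ga gb \<Phi>_def by (simp add: distrib_right)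
    also have "\<dots> = qq * (\<Sum>x\<in>W n. p x * (\<Sum>k\<le>mm x. bn (mm x) pr k * (pr * h (uu x) (Suc (mm x)) (Suc k) + (1 - pr) * h (uu x) (Suc (mm x)) k)))"
      by (simp only: binom_step qq_def)
    also have "\<dots> = qq * pr * (\<Sum>x\<in>W n. p x * (\<Sum>k\<le>mm x. bn (mm x) pr k * h (uu x) (Suc (mm x)) (Suc k)))
                 + qq * (1 - pr) * (\<Sum>x\<in>W n. p x * (\<Sum>k\<le>mm x. bn (mm x) pr k * h (uu x) (Suc (mm x)) k))"
      unfolding sum_lin by (simp only: distrib_left mult.assoc[symmetric])
    also have "\<dots> = f a + f b" unfolding fa fb Qa_eq Qb_eq by simp
    finally show ?thesis .
  qed
  have "(\<Sum>x\<in>W (Suc n). p x * h (uu x) (mm x) (kk x)) = (\<Sum>z\<in>{1..L}. f z)"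
    by (simp add: sum_words_Suc f_def)
  also have "\<dots> = f a + (f b + (\<Sum>z\<in>{1..L} - {a} - {b}. f z))"
    using a b a_ne_b by (simp add: sum.remove)
  also have "\<dots> = g a + (g b + (\<Sum>z\<in>{1..L} - {a} - {b}. g z))"
    using gab rest by simp
  also have "\<dots> = (\<Sum>z\<in>{1..L}. g z)"
  proof -
    have r1: "sum g {1..L} = g a + sum g ({1..L} - {a})" by (rule sum.remove) (use a in auto)
    have r2: "sum g ({1..L} - {a}) = g b + sum g ({1..L} - {a} - {b})" by (rule sum.remove) (use b a_ne_b in auto)
    show ?thesis using r1 r2 by simp
  qed
  also have "\<dots> = (\<Sum>x\<in>W (Suc n). p x * (\<Sum>k\<le>mm x. bn (mm x) pr k * h (uu x) (mm x) k))"
    by (simp add: sum_words_Suc g_def)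
  finally show ?case .
qed

end

context dm2 begin

definition dl where "dl = log 2 (Q a) - log 2 (Q b)"
definition al where "al u m = - log 2 u - real m * log 2 (Q b)"
definition hw where "hw t u m k = (if t \<le> al u m - real k * dl \<and> al u m - real k * dl < t + 1 then 1 else (0::real))"
definition c1 where "c1 = 4 * (1 / \<bar>dl\<bar> + 1) / sqrt (pr * (1 - pr))"
definition gB where "gB m = (if m = 0 then 1 else min 1 (c1 / sqrt (real m)))"
definition ind where "ind z = (if z = a \<or> z = b then 1 else (0::real))"

lemma dl_ne: "dl \<noteq> 0"
proof
  assume "dl = 0"
  then have "log 2 (Q a) = log 2 (Q b)" by (simp add: dl_def)
  then have "Q a = Q b" using log_inj[of 2] Qa Qb by (auto simp: inj_on_def)
  then show False using ab by simp
qed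

lemma sc_split: "x \<in> W n \<Longrightarrow> sc x = al (uu x) (mm x) - real (kk x) * dl"
proof -
  assume x: "x \<in> W n"
  have u: "uu x > 0" using x uu_pos by (auto simp: words_def)
  have le: "kk x \<le> mm x" by (rule kk_le_mm)
  have "sc x = - log 2 (uu x * Q a ^ kk x * Q b ^ (mm x - kk x))"
    by (simp add: sc_def p_split)
  also have "\<dots> = - (log 2 (uu x) + real (kk x) * log 2 (Q a) + real (mm x - kk x) * log 2 (Q b))"
    using u Qa Qb by (simp add: log_mult log_nat_power)
  also have "\<dots> = al (uu x) (mm x) - real (kk x) * dl"
    using le by (simp add: al_def dl_def of_nat_diff algebra_simps)
  finally show ?thesis .
qed

lemma mass_eq:
  "(\<Sum>x\<in>{x\<in>W n. t \<le> sc x \<and> sc x < t + 1}. p x) = (\<Sum>x\<in>W n. p x * hw t (uu x) (mm x) (kk x))"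
proof -
  have "(\<Sum>x\<in>W n. p x * hw t (uu x) (mm x) (kk x)) = (\<Sum>x\<in>W n. if t \<le> sc x \<and> sc x < t + 1 then p x else 0)"
    by (intro sum.cong refl) (simp add: hw_def sc_split)
  also have "\<dots> = (\<Sum>x\<in>{x\<in>W n. t \<le> sc x \<and> sc x < t + 1}. p x)"
    by (rule sum.inter_filter[symmetric, OF finite_words])
  finally show ?thesis by simp
qed

lemma inner_le1: "(\<Sum>k\<le>m. bn m pr k * hw t u m k) \<le> 1"
proof -
  have "(\<Sum>k\<le>m. bn m pr k * hw t u m k) \<le> (\<Sum>k\<le>m. bn m pr k)"
    by (intro sum_mono) (use bn_nonneg pr_bounds in \<open>auto simp: hw_def\<close>)
  then show ?thesis using bn_sum by simp
qed

lemma inner_le_c1: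
  assumes m: "m \<ge> 1"
  shows "(\<Sum>k\<le>m. bn m pr k * hw t u m k) \<le> c1 / sqrt (real m)"
proof -
  define K where "K = {k\<in>{..m}. t \<le> al u m - real k * dl \<and> al u m - real k * dl < t + 1}"
  have "(\<Sum>k\<le>m. bn m pr k * hw t u m k) = (\<Sum>k\<le>m. if k \<in> K then bn m pr k else 0)"
    by (intro sum.cong refl) (simp add: hw_def K_def)
  also have "\<dots> = (\<Sum>k\<in>K. bn m pr k)"
    by (simp add: sum.If_cases K_def Int_def)
  also have "\<dots> \<le> (\<Sum>k\<in>K. 4 / sqrt (m * pr * (1 - pr)))"
    by (intro sum_mono bn_bound) (use pr_bounds m in \<open>auto simp: K_def\<close>)
  also have "\<dots> = real (card K) * (4 / sqrt (m * pr * (1 - pr)))" by simp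
  also have "\<dots> \<le> (1 / \<bar>dl\<bar> + 1) * (4 / sqrt (m * pr * (1 - pr)))"
  proof -
    have mp: "0 \<le> real m * pr * (1 - pr)" using pr_bounds by simp
    show ?thesis by (intro mult_right_mono card_window[OF dl_ne]) (use mp in \<open>auto simp: K_def\<close>)
  qed
  also have "\<dots> = c1 / sqrt (real m)"
  proof -
    have e: "sqrt (m * pr * (1 - pr)) = sqrt m * sqrt (pr * (1 - pr))" by (simp add: real_sqrt_mult mult.assoc)
    have "sqrt (pr * (1 - pr)) > 0" "sqrt m > 0" using pr_bounds m by auto
    then show ?thesis unfolding e c1_def by (simp add: field_simps)
  qed
  finally show ?thesis .
qed

lemma inner_le_gB: "(\<Sum>k\<le>m. bn m pr k * hw t u m k) \<le> gB m"
proof (cases "m = 0")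
  case True then show ?thesis using inner_le1[of m t u] by (simp add: gB_def)
next
  case False then show ?thesis using inner_le1[of m t u] inner_le_c1[of m t u] by (simp add: gB_def)
qed

lemma F_ind: "F ind x = real (mm x)"
  by (induction x) (auto simp: ind_def mm_Cons mm_def)

lemma mu_ind: "mu ind = qq"
proof -
  have "mu ind = (\<Sum>z\<in>{1..L}. if z = a \<or> z = b then Q z else 0)"
    unfolding mu_def ind_def by (intro sum.cong refl) auto
  also have "\<dots> = (\<Sum>z\<in>{1..L} \<inter> {z. z = a \<or> z = b}. Q z)" by (simp add: sum.If_cases)
  also have "{1..L} \<inter> {z. z = a \<or> z = b} = {a, b}" using a b by auto
  finally show ?thesis using a_ne_b by (simp add: qq_def)
qed

lemma c1_pos: "c1 > 0"
proof -
  have "sqrt (pr * (1 - pr)) > 0" using pr_bounds by simp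
  moreover have "4 * (1 / \<bar>dl\<bar> + 1) > 0" by (intro mult_pos_pos add_nonneg_pos) auto
  ultimately show ?thesis unfolding c1_def by (rule divide_pos_pos[rotated])
qed

definition KK where "KK = 4 * var ind / qq^2 + c1 * sqrt 2 / sqrt qq"

lemma expect_gB:
  assumes n: "n \<ge> 1"
  shows "(\<Sum>x\<in>W n. p x * gB (mm x)) \<le> KK / sqrt n"
proof -
  define R where "R = real n * qq / 2"
  have R0: "R > 0" using n qq_pos by (simp add: R_def)
  define Bad where "Bad = {x\<in>W n. R \<le> \<bar>F ind x - n * mu ind\<bar>}"
  define C where "C = c1 / sqrt R"
  have C0: "C \<ge> 0" using c1_pos R0 by (simp add: C_def)
  have pt: "p x * gB (mm x) \<le> p x * ((if x \<in> Bad then 1 else 0) + C)" if x: "x \<in> W n" for x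
  proof -
    have px: "p x \<ge> 0" using p_pos[OF x] by simp
    have "gB (mm x) \<le> (if x \<in> Bad then 1 else 0) + C"
    proof (cases "x \<in> Bad")
      case True
      have "gB (mm x) \<le> 1" by (simp add: gB_def)
      then show ?thesis using True C0 by simp
    next
      case False
      then have "\<bar>real (mm x) - n * qq\<bar> < R" using x by (simp add: Bad_def F_ind mu_ind)
      then have mR: "real (mm x) > R" unfolding R_def by linarith
      then have m1: "mm x \<noteq> 0" using R0 by auto
      have "gB (mm x) \<le> c1 / sqrt (real (mm x))" using m1 by (simp add: gB_def)
      also have "\<dots> \<le> c1 / sqrt R" using mR R0 c1_pos by (intro divide_left_mono) auto
      finally show ?thesis using False by (simp add: C_def)
    qed
    then show ?thesis using px by (rule mult_left_mono)
  qed
  have "(\<Sum>x\<in>W n. p x * gB (mm x)) \<le> (\<Sum>x\<in>W n. p x * ((if x \<in> Bad then 1 else 0) + C))"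
    by (intro sum_mono pt)
  also have "\<dots> = (\<Sum>x\<in>W n. if x \<in> Bad then p x else 0) + C * (\<Sum>x\<in>W n. p x)"
  proof -
    have "(\<Sum>x\<in>W n. p x * ((if x \<in> Bad then 1 else 0) + C)) = (\<Sum>x\<in>W n. (if x \<in> Bad then p x else 0) + C * p x)"
      by (intro sum.cong refl) (simp add: algebra_simps)
    then show ?thesis by (simp add: sum.distrib sum_distrib_left)
  qed
  also have "(\<Sum>x\<in>W n. if x \<in> Bad then p x else 0) = (\<Sum>x\<in>Bad. p x)"
    by (simp add: sum.inter_filter[symmetric, OF finite_words] Bad_def)
  also have "(\<Sum>x\<in>Bad. p x) \<le> n * var ind / R^2"
    unfolding Bad_def by (rule cheb_F[OF R0])
  also have "(\<Sum>x\<in>W n. p x) = 1" by (rule sum_p)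
  finally have A: "(\<Sum>x\<in>W n. p x * gB (mm x)) \<le> n * var ind / R^2 + C" by simp
  have sn: "sqrt (real n) \<ge> 1" using n by simp
  have vi: "var ind \<ge> 0" unfolding var_def
    using pos by (intro sum_nonneg mult_nonneg_nonneg) (auto intro: less_imp_le)
  have "n * var ind / R^2 = (4 * var ind / qq^2) / n"
    using n qq_pos by (simp add: R_def power2_eq_square field_simps)
  also have "\<dots> \<le> (4 * var ind / qq^2) / sqrt n"
  proof (rule divide_left_mono)
    have "real n * 1 \<le> real n * real n" using n by (intro mult_left_mono) auto
    then have "sqrt (real n) \<le> sqrt (real n * real n)" by (intro real_sqrt_le_mono) simp
    then show "sqrt (real n) \<le> real n" by simp
  qed (use vi qq_pos sn in auto)
  finally have B1: "n * var ind / R^2 \<le> (4 * var ind / qq^2) / sqrt n" .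
  have "C = c1 * sqrt 2 / sqrt qq / sqrt n"
    using qq_pos n by (simp add: C_def R_def real_sqrt_mult real_sqrt_divide field_simps)
  then have "n * var ind / R^2 + C \<le> KK / sqrt n" using B1 by (simp add: KK_def add_divide_distrib)
  then show ?thesis using A by linarith
qed

lemma anticonc:
  assumes n: "n \<ge> 1"
  shows "(\<Sum>x\<in>{x\<in>W n. t \<le> sc x \<and> sc x < t + 1}. p x) \<le> KK / sqrt n"
proof -
  have "(\<Sum>x\<in>{x\<in>W n. t \<le> sc x \<and> sc x < t + 1}. p x) = (\<Sum>x\<in>W n. p x * hw t (uu x) (mm x) (kk x))"
    by (rule mass_eq)
  also have "\<dots> = (\<Sum>x\<in>W n. p x * (\<Sum>k\<le>mm x. bn (mm x) pr k * hw t (uu x) (mm x) k))"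
    by (rule CB)
  also have "\<dots> \<le> (\<Sum>x\<in>W n. p x * gB (mm x))"
    by (intro sum_mono mult_left_mono inner_le_gB) (auto intro: less_imp_le p_pos)
  also have "\<dots> \<le> KK / sqrt n" by (rule expect_gB[OF n])
  finally show ?thesis .
qed

lemma KK_pos: "KK > 0"
proof -
  have vi: "var ind \<ge> 0" unfolding var_def
    using pos by (intro sum_nonneg mult_nonneg_nonneg) (auto intro: less_imp_le)
  then show ?thesis using c1_pos qq_pos by (simp add: KK_def add_nonneg_pos)
qed

end

lemma sum_pow2_lt: "(\<Sum>j<k. (2::real)^(Suc j)) \<le> 2 * 2^k"
  by (induction k) auto

context dm2 begin

lemma L1: "L \<ge> 1" using a by auto

lemma count_lt:
  assumes n: "n \<ge> 1"
  shows "real (card {x\<in>W n. sc x < real k}) \<le> 2 * (KK / sqrt n) * 2^k"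
proof -
  define win where "win j = {x\<in>W n. real j \<le> sc x \<and> sc x < real j + 1}" for j :: nat
  have sub: "{x\<in>W n. sc x < real k} \<subseteq> (\<Union>j<k. win j)"
  proof
    fix x assume x: "x \<in> {x\<in>W n. sc x < real k}"
    then have xW: "x \<in> W n" and s: "sc x < real k" by auto
    have s0: "sc x \<ge> 0" using sc_nonneg[OF xW] .
    define j where "j = nat \<lfloor>sc x\<rfloor>"
    have rj: "real j = of_int \<lfloor>sc x\<rfloor>" using s0 by (simp add: j_def)
    have fc: "of_int \<lfloor>sc x\<rfloor> \<le> sc x \<and> sc x < of_int (\<lfloor>sc x\<rfloor> + 1)" by (rule floor_correct)
    have "real j < real k" using rj fc s by linarith
    then have "j < k" by simp
    moreover have "x \<in> win j" using xW rj fc by (simp add: win_def)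
    ultimately show "x \<in> (\<Union>j<k. win j)" by blast
  qed
  have fin: "finite (win j)" for j by (simp add: win_def finite_words)
  have "card {x\<in>W n. sc x < real k} \<le> card (\<Union>j<k. win j)"
    by (intro card_mono sub) (simp add: fin)
  also have "\<dots> \<le> (\<Sum>j<k. card (win j))" by (rule card_UN_le) simp
  finally have c1': "real (card {x\<in>W n. sc x < real k}) \<le> (\<Sum>j<k. real (card (win j)))"
    by (metis of_nat_le_iff of_nat_sum)
  have cw: "real (card (win j)) \<le> 2^(Suc j) * (KK / sqrt n)" for j
  proof -
    have "real (card (win j)) \<le> 2 powr (real j + 1) * (\<Sum>x\<in>win j. p x)"
      by (rule count_le_mass) (auto simp: win_def)
    also have "(\<Sum>x\<in>win j. p x) \<le> KK / sqrt n" unfolding win_def by (rule anticonc[OF n])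
    then have "2 powr (real j + 1) * (\<Sum>x\<in>win j. p x) \<le> 2 powr (real j + 1) * (KK / sqrt n)"
      by (intro mult_left_mono) auto
    also have "2 powr (real j + 1) = 2^(Suc j)"
      by (metis of_nat_Suc powr_realpow add.commute zero_less_numeral)
    finally show ?thesis .
  qed
  have "(\<Sum>j<k. real (card (win j))) \<le> (\<Sum>j<k. 2^(Suc j) * (KK / sqrt n))"
    by (intro sum_mono cw)
  also have "\<dots> = (\<Sum>j<k. (2::real)^(Suc j)) * (KK / sqrt n)" by (rule sum_distrib_right[symmetric])
  also have "\<dots> \<le> (2 * 2^k) * (KK / sqrt n)"
    using KK_pos by (intro mult_right_mono sum_pow2_lt) auto
  finally show ?thesis using c1' by (simp add: mult_ac)
qed

lemma lower_Dcode:
  assumes n: "n \<ge> 1" and S: "S \<subseteq> W n" "S \<noteq> {}"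
  shows "Dcode L Q n S \<ge> log 2 n / 2 - log 2 (2 * KK) - 3"
proof -
  define \<eta> where "\<eta> = 2 * (KK / sqrt n)"
  have eta: "\<eta> > 0" using KK_pos n by (simp add: \<eta>_def)
  have "Dcode L Q n S \<ge> - log 2 \<eta> - 3 - max 0 (log 2 (card S / \<eta>)) * 0 / card S"
  proof (rule LC2[OF S eta])
    fix k :: nat
    have "card {x\<in>S. sc x < real k} \<le> card {x\<in>W n. sc x < real k}"
      using S by (intro card_mono) (auto simp: finite_words)
    then have "real (card {x\<in>S. sc x < real k}) \<le> real (card {x\<in>W n. sc x < real k})" by simp
    also have "\<dots> \<le> \<eta> * 2^k" using count_lt[OF n, of k] by (simp add: \<eta>_def)
    finally show "real (card {x\<in>S. sc x < real k}) \<le> 0 + \<eta> * 2^k" by simp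
  qed simp
  moreover have "- log 2 \<eta> = log 2 n / 2 - log 2 (2 * KK)"
  proof -
    have "log 2 \<eta> = log 2 (2 * KK) - log 2 (sqrt n)"
      using KK_pos n by (simp add: \<eta>_def log_divide)
    moreover have "log 2 (sqrt (real n)) = log 2 n / 2" unfolding sqrt_def by (subst log_root) auto
    ultimately show ?thesis by simp
  qed
  ultimately show ?thesis by simp
qed

lemma lower_Dstar:
  assumes n: "n \<ge> 1"
  shows "Dstar L Q n \<ge> log 2 n / 2 - log 2 (2 * KK) - 3"
  by (rule Dstar_ge[OF L1]) (rule lower_Dcode[OF n])

end

lemma lim_half_log:
  fixes D :: "nat \<Rightarrow> real"
  assumes lo: "\<And>n. n \<ge> 1 \<Longrightarrow> log 2 n / 2 - C1 \<le> D n"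
    and up: "\<And>n. n \<ge> 1 \<Longrightarrow> D n \<le> log 2 n / 2 + C2"
  shows "(\<lambda>n. D n / ((1/2) * log 2 (real n))) \<longlonglongrightarrow> 1"
proof (rule tendsto_sandwich[of "\<lambda>n. 1 - 2 * C1 / log 2 (real n)" _ _ "\<lambda>n. 1 + 2 * C2 / log 2 (real n)"])
  show "eventually (\<lambda>n. 1 - 2 * C1 / log 2 (real n) \<le> D n / ((1/2) * log 2 (real n))) sequentially"
    using eventually_ge_at_top[of 2]
  proof eventually_elim
    case (elim n)
    have l: "log 2 (real n) > 0" using elim by simp
    have "(log 2 n / 2 - C1) / ((1/2) * log 2 n) \<le> D n / ((1/2) * log 2 n)"
      using lo[of n] elim l by (intro divide_right_mono) auto
    moreover have "(log 2 n / 2 - C1) / ((1/2) * log 2 n) = 1 - 2 * C1 / log 2 n"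
      using l by (simp add: field_simps)
    ultimately show ?case by simp
  qed
  show "eventually (\<lambda>n. D n / ((1/2) * log 2 (real n)) \<le> 1 + 2 * C2 / log 2 (real n)) sequentially"
    using eventually_ge_at_top[of 2]
  proof eventually_elim
    case (elim n)
    have l: "log 2 (real n) > 0" using elim by simp
    have "D n / ((1/2) * log 2 n) \<le> (log 2 n / 2 + C2) / ((1/2) * log 2 n)"
      using up[of n] elim l by (intro divide_right_mono) auto
    moreover have "(log 2 n / 2 + C2) / ((1/2) * log 2 n) = 1 + 2 * C2 / log 2 n"
      using l by (simp add: field_simps)
    ultimately show ?case by simp
  qed
qed real_asymp+

context dm begin

lemma mass_le1: "T \<subseteq> W n \<Longrightarrow> (\<Sum>x\<in>T. p x) \<le> 1"
proof -
  assume T: "T \<subseteq> W n"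
  have "(\<Sum>x\<in>T. p x) \<le> (\<Sum>x\<in>W n. p x)"
    by (intro sum_mono2) (use T in \<open>auto simp: finite_words intro: less_imp_le p_pos\<close>)
  then show ?thesis using sum_p by simp
qed

lemma tail_mass:
  assumes d: "\<delta> > 0" and n: "n \<ge> 1" and T: "T \<subseteq> W n"
    and far: "\<And>x. x \<in> T \<Longrightarrow> n * \<delta> \<le> \<bar>sc x - n * mu cc\<bar>"
  shows "(\<Sum>x\<in>T. p x) \<le> (var cc + 1) / (n * \<delta>^2)"
proof -
  have nd: "real n * \<delta> > 0" using d n by simp
  have "(\<Sum>x\<in>T. p x) \<le> (\<Sum>x\<in>{x\<in>W n. n * \<delta> \<le> \<bar>F cc x - n * mu cc\<bar>}. p x)"
  proof (intro sum_mono2)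
    show "T \<subseteq> {x\<in>W n. n * \<delta> \<le> \<bar>F cc x - n * mu cc\<bar>}"
    proof
      fix x assume x: "x \<in> T"
      then have xW: "x \<in> W n" using T by auto
      show "x \<in> {x\<in>W n. n * \<delta> \<le> \<bar>F cc x - n * mu cc\<bar>}"
        using far[OF x] sc_F[OF xW] xW by simp
    qed
  qed (auto simp: finite_words intro: less_imp_le p_pos)
  also have "\<dots> \<le> n * var cc / (n * \<delta>)^2" by (rule cheb_F[OF nd])
  also have "\<dots> = var cc / (n * \<delta>^2)" using n d by (simp add: power2_eq_square field_simps)
  also have "\<dots> \<le> (var cc + 1) / (n * \<delta>^2)" using n d by (intro divide_right_mono) auto
  finally show ?thesis .
qed

lemma rate_lower_bound:
  assumes d: "\<delta> > 0" and n: "n \<ge> 1" and S: "S \<subseteq> W n" "S \<noteq> {}"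
    and small: "log 2 (card S) \<le> n * (mu cc - \<delta>) + log 2 ((var cc + 1) / (n * \<delta>^2))"
  shows "Dcode L Q n S \<ge> - log 2 ((var cc + 1) / (n * \<delta>^2)) - 3"
proof -
  define \<eta> where "\<eta> = (var cc + 1) / (n * \<delta>^2)"
  have V0: "var cc \<ge> 0" unfolding var_def
    using pos by (intro sum_nonneg mult_nonneg_nonneg) (auto intro: less_imp_le)
  have eta: "\<eta> > 0" using V0 n d by (simp add: \<eta>_def)
  have M: "card S > 0" using S finite_subset[OF S(1) finite_words] by auto
  have "Dcode L Q n S \<ge> - log 2 \<eta> - 3 - max 0 (log 2 (card S / \<eta>)) * 0 / card S"
  proof (rule LC2[OF S eta])
    fix k :: nat assume k: "1 \<le> k" "real k \<le> log 2 (card S / \<eta>)"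
    have "log 2 (card S / \<eta>) = log 2 (card S) - log 2 \<eta>" using M eta by (simp add: log_divide)
    then have kb: "real k \<le> n * (mu cc - \<delta>)" using k small by (simp add: \<eta>_def)
    have "card {x\<in>S. sc x < real k} \<le> card {x\<in>W n. sc x < real k}"
      using S by (intro card_mono) (auto simp: finite_words)
    then have "real (card {x\<in>S. sc x < real k}) \<le> real (card {x\<in>W n. sc x < real k})" by simp
    also have "\<dots> \<le> 2 powr (real k) * (\<Sum>x\<in>{x\<in>W n. sc x < real k}. p x)"
      by (rule count_le_mass) auto
    also have "(\<Sum>x\<in>{x\<in>W n. sc x < real k}. p x) \<le> \<eta>"
      unfolding \<eta>_def by (rule tail_mass[OF d n]) (use kb in \<open>auto simp: algebra_simps\<close>)
    then have "2 powr (real k) * (\<Sum>x\<in>{x\<in>W n. sc x < real k}. p x) \<le> 2 powr (real k) * \<eta>"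
      by (intro mult_left_mono) auto
    also have "2 powr (real k) = 2^k" by (simp add: powr_realpow)
    finally show "real (card {x\<in>S. sc x < real k}) \<le> 0 + \<eta> * 2^k" by (simp add: mult_ac)
  qed simp
  then show ?thesis by (simp add: \<eta>_def)
qed

lemma rate_upper_bound:
  assumes d: "\<delta> > 0" and n: "n \<ge> 1" and S: "S \<subseteq> W n" "S \<noteq> {}"
  shows "Dcode L Q n S \<ge> - log 2 ((var cc + 1) / (n * \<delta>^2)) - 3
          - max 0 (log 2 (card S / ((var cc + 1) / (n * \<delta>^2)))) * 2 powr (n * (mu cc + \<delta>)) / card S"
proof -
  define \<eta> where "\<eta> = (var cc + 1) / (n * \<delta>^2)"
  define \<tau> where "\<tau> = n * (mu cc + \<delta>)"
  have V0: "var cc \<ge> 0" unfolding var_def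
    using pos by (intro sum_nonneg mult_nonneg_nonneg) (auto intro: less_imp_le)
  have eta: "\<eta> > 0" using V0 n d by (simp add: \<eta>_def)
  have "Dcode L Q n S \<ge> - log 2 \<eta> - 3 - max 0 (log 2 (card S / \<eta>)) * 2 powr \<tau> / card S"
  proof (rule LC2[OF S eta])
    fix k :: nat
    define A where "A = {x\<in>W n. sc x < \<tau>}"
    define B where "B = {x\<in>W n. \<tau> \<le> sc x \<and> sc x < real k}"
    have "card {x\<in>S. sc x < real k} \<le> card (A \<union> B)"
      using S by (intro card_mono) (auto simp: finite_words A_def B_def)
    also have "\<dots> \<le> card A + card B" by (rule card_Un_le)
    finally have c: "real (card {x\<in>S. sc x < real k}) \<le> real (card A) + real (card B)" by simp
    have "real (card A) \<le> 2 powr \<tau> * (\<Sum>x\<in>A. p x)" by (rule count_le_mass) (auto simp: A_def)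
    also have "\<dots> \<le> 2 powr \<tau> * 1" by (intro mult_left_mono mass_le1) (auto simp: A_def)
    finally have cA: "real (card A) \<le> 2 powr \<tau>" by simp
    have "real (card B) \<le> 2 powr (real k) * (\<Sum>x\<in>B. p x)" by (rule count_le_mass) (auto simp: B_def)
    also have "(\<Sum>x\<in>B. p x) \<le> \<eta>"
      unfolding \<eta>_def by (rule tail_mass[OF d n]) (auto simp: B_def \<tau>_def algebra_simps)
    then have "2 powr (real k) * (\<Sum>x\<in>B. p x) \<le> 2 powr (real k) * \<eta>"
      by (intro mult_left_mono) auto
    also have "2 powr (real k) = 2^k" by (simp add: powr_realpow)
    finally have cB: "real (card B) \<le> \<eta> * 2^k" by (simp add: mult_ac)
    show "real (card {x\<in>S. sc x < real k}) \<le> 2 powr \<tau> + \<eta> * 2^k" using c cA cB by linarith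
  qed simp
  then show ?thesis by (simp add: \<eta>_def \<tau>_def)
qed

end

context dm begin

lemma rate_limit:
  assumes Cu: "\<And>n. n \<ge> 1 \<Longrightarrow> Dstar L Q n \<le> log 2 n / 2 + Cu"
    and L1: "L \<ge> 1"
    and hS: "\<forall>n\<ge>1. S n \<noteq> {} \<and> S n \<subseteq> W n \<and> Dcode L Q n (S n) = Dstar L Q n"
  shows "(\<lambda>n. log 2 (real (card (S n))) / real n) \<longlonglongrightarrow> mu cc"
proof (rule tendstoI)
  fix e :: real assume e: "e > 0"
  define \<delta> where "\<delta> = e / 3"
  have d: "\<delta> > 0" using e by (simp add: \<delta>_def)
  define H where "H = mu cc"
  define V1 where "V1 = var cc + 1"
  have V0: "var cc \<ge> 0" unfolding var_def
    using pos by (intro sum_nonneg mult_nonneg_nonneg) (auto intro: less_imp_le)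
  have V1pos: "V1 > 0" using V0 by (simp add: V1_def)
  define A where "A = log 2 (real L)"
  define B where "B = \<bar>log 2 V1\<bar> + \<bar>2 * log 2 \<delta>\<bar>"
  have A0: "A \<ge> 0" using L1 by (simp add: A_def)
  have E1: "eventually (\<lambda>n. log 2 (real n) / 2 > Cu + 3 + log 2 V1 - 2 * log 2 \<delta>) sequentially"
    by real_asymp
  have E2: "eventually (\<lambda>n. (log 2 V1 - log 2 (real n) - 2 * log 2 \<delta>) / real n > - \<delta>) sequentially"
    using d by real_asymp
  have E3: "eventually (\<lambda>n. log 2 (real n) / 2 + (2 * log 2 \<delta> - log 2 V1 - 3)
              - (real n * A + B + log 2 (real n)) / (real n)^2 > Cu) sequentially"
    by real_asymp
  have E4: "eventually (\<lambda>n. 2 * log 2 (real n) / real n < \<delta>) sequentially"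
    using d by real_asymp
  show "eventually (\<lambda>n. dist (log 2 (real (card (S n))) / real n) (mu cc) < e) sequentially"
    using E1 E2 E3 E4 eventually_ge_at_top[of 1]
  proof eventually_elim
    case (elim n)
    then have n: "n \<ge> 1" by simp
    have Sn: "S n \<subseteq> W n" "S n \<noteq> {}" using hS n by auto
    have Dn: "Dcode L Q n (S n) \<le> log 2 n / 2 + Cu" using hS n Cu[OF n] by auto
    define M where "M = real (card (S n))"
    have finS: "finite (S n)" using Sn finite_subset finite_words by blast
    have M1: "M \<ge> 1" using finS Sn by (simp add: M_def Suc_le_eq card_gt_0_iff)
    have "card (S n) \<le> card (W n)" using Sn by (intro card_mono) (auto simp: finite_words)
    then have "M \<le> real L ^ n" by (simp add: M_def card_words)
    then have "log 2 M \<le> log 2 (real L ^ n)" using M1 L1 by (subst log_le_cancel_iff) auto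
    also have "\<dots> = n * A" using L1 by (simp add: A_def log_nat_power)
    finally have logM: "log 2 M \<le> n * A" .
    define \<eta> where "\<eta> = V1 / (n * \<delta>^2)"
    have eta: "\<eta> > 0" using V1pos n d by (simp add: \<eta>_def)
    have leta: "log 2 \<eta> = log 2 V1 - log 2 n - 2 * log 2 \<delta>"
      using V1pos n d by (simp add: \<eta>_def log_divide log_mult log_nat_power)
    have ln0: "log 2 (real n) \<ge> 0" using n by simp
    have low: "log 2 M > n * (H - \<delta>) + log 2 \<eta>"
    proof (rule ccontr)
      assume "\<not> ?thesis"
      then have "log 2 (card (S n)) \<le> n * (mu cc - \<delta>) + log 2 ((var cc + 1) / (n * \<delta>^2))"
        by (simp add: M_def H_def \<eta>_def V1_def)
      from rate_lower_bound[OF d n Sn this]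
      have "Dcode L Q n (S n) \<ge> - log 2 \<eta> - 3" by (simp add: \<eta>_def V1_def)
      then show False using Dn leta elim(1) by linarith
    qed
    have "log 2 M / n > (n * (H - \<delta>) + log 2 \<eta>) / n"
      using low n by (intro divide_strict_right_mono) auto
    also have "(n * (H - \<delta>) + log 2 \<eta>) / n = H - \<delta> + (log 2 V1 - log 2 n - 2 * log 2 \<delta>) / n"
      using n by (simp add: leta field_simps)
    finally have L2: "log 2 M / n > H - 2 * \<delta>" using elim(2) by linarith
    have upp: "log 2 M < n * (H + \<delta>) + 2 * log 2 n"
    proof (rule ccontr)
      assume "\<not> ?thesis"
      then have big: "log 2 M \<ge> n * (H + \<delta>) + 2 * log 2 n" by simp
      define \<tau> where "\<tau> = n * (H + \<delta>)"
      have "M = 2 powr (log 2 M)" using M1 by simp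
      also have "\<dots> \<ge> 2 powr (\<tau> + 2 * log 2 n)" using big by (simp add: \<tau>_def)
      finally have M2: "M \<ge> 2 powr \<tau> * 2 powr (2 * log 2 n)" by (simp add: powr_add)
      have e2: "2 powr (2 * log 2 (real n)) = (real n)^2"
      proof -
        have "2 powr (2 * log 2 (real n)) = (2 powr (log 2 (real n))) powr 2" by (simp add: powr_powr mult.commute)
        also have "\<dots> = real n powr 2" using n by simp
        also have "\<dots> = (real n)^2" using n by (simp add: powr_numeral)
        finally show ?thesis .
      qed
      have "M \<ge> 2 powr \<tau> * (real n)^2" using M2 e2 by simp
      then have ratio: "2 powr \<tau> / M \<le> 1 / (real n)^2"
        using M1 n by (simp add: field_simps)
      define Z where "Z = real n * A + B + log 2 (real n)"
      have "log 2 (M / \<eta>) = log 2 M - log 2 \<eta>" using M1 eta by (simp add: log_divide)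
      also have "\<dots> \<le> Z" unfolding Z_def B_def using logM leta by linarith
      finally have mz: "max 0 (log 2 (M / \<eta>)) \<le> Z" using A0 ln0 by (simp add: Z_def B_def)
      have Z0: "Z \<ge> 0" using A0 ln0 by (simp add: Z_def B_def)
      have "max 0 (log 2 (M / \<eta>)) * 2 powr \<tau> / M = max 0 (log 2 (M / \<eta>)) * (2 powr \<tau> / M)" by simp
      also have "\<dots> \<le> Z * (1 / (real n)^2)"
        using mz ratio Z0 M1 by (intro mult_mono) auto
      finally have extra: "max 0 (log 2 (M / \<eta>)) * 2 powr \<tau> / M \<le> Z / (real n)^2" by simp
      have "Dcode L Q n (S n) \<ge> - log 2 \<eta> - 3 - max 0 (log 2 (M / \<eta>)) * 2 powr \<tau> / M"
        using rate_upper_bound[OF d n Sn] by (simp add: M_def \<eta>_def V1_def \<tau>_def H_def)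
      then have "Dcode L Q n (S n) \<ge> - log 2 \<eta> - 3 - Z / (real n)^2" using extra by linarith
      then show False using Dn leta elim(3) by (simp add: Z_def)
    qed
    have "log 2 M / n < (n * (H + \<delta>) + 2 * log 2 n) / n"
      using upp n by (intro divide_strict_right_mono) auto
    also have "\<dots> = H + \<delta> + 2 * log 2 n / n" using n by (simp add: field_simps)
    finally have U2: "log 2 M / n < H + 2 * \<delta>" using elim(4) by linarith
    show ?case using L2 U2 by (simp add: dist_real_def M_def H_def \<delta>_def abs_less_iff)
  qed
qed

end

theorem theorem3:
  fixes L :: nat and Q :: "nat \<Rightarrow> real"
  assumes pos: "\<forall>a\<in>{1..L}. Q a > 0"
    and pmf: "(\<Sum>a\<in>{1..L}. Q a) = 1"
    and nonunif: "\<exists>a\<in>{1..L}. Q a \<noteq> unif_L L a"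
  shows "((\<lambda>n. Dstar L Q n / ((1/2) * log 2 (real n))) \<longlonglongrightarrow> 1) \<and>
         (\<forall>S :: nat \<Rightarrow> nat list set.
           (\<forall>n\<ge>1. S n \<noteq> {} \<and> S n \<subseteq> words L n \<and> Dcode L Q n (S n) = Dstar L Q n) \<longrightarrow>
           (\<lambda>n. log 2 (real (card (S n))) / real n) \<longlonglongrightarrow> entropy_L L Q)"
proof -
  interpret dm L Q using pos pmf by unfold_locales
  obtain a where a: "a \<in> {1..L}" and au: "Q a \<noteq> unif_L L a" using nonunif by blast
  have L1: "L \<ge> 1" using a by auto
  have "\<exists>b\<in>{1..L}. Q b \<noteq> Q a"
  proof (rule ccontr)
    assume "\<not> ?thesis"
    then have all: "\<forall>b\<in>{1..L}. Q b = Q a" by simp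
    have "(\<Sum>b\<in>{1..L}. Q b) = (\<Sum>b\<in>{1..L}. Q a)" using all by (intro sum.cong) auto
    then have "real L * Q a = 1" using pmf by simp
    then have "Q a = 1 / real L" using L1 by (simp add: field_simps)
    then show False using au a by (simp add: unif_L_def)
  qed
  then obtain b where b: "b \<in> {1..L}" and ba: "Q b \<noteq> Q a" by blast
  interpret dm2 L Q a b using a b ba by unfold_locales auto
  have part1: "(\<lambda>n. Dstar L Q n / ((1/2) * log 2 (real n))) \<longlonglongrightarrow> 1"
  proof (rule lim_half_log)
    fix n :: nat assume n: "n \<ge> 1"
    show "log 2 n / 2 - (log 2 (2 * KK) + 3) \<le> Dstar L Q n" using lower_Dstar[OF n] by simp
    show "Dstar L Q n \<le> log 2 n / 2 + (1 + log 2 (2 * (2 * sqrt (2 * var cc) + 3)))"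
      by (rule upper_Dstar[OF n])
  qed
  have part2: "\<forall>S :: nat \<Rightarrow> nat list set.
           (\<forall>n\<ge>1. S n \<noteq> {} \<and> S n \<subseteq> words L n \<and> Dcode L Q n (S n) = Dstar L Q n) \<longrightarrow>
           (\<lambda>n. log 2 (real (card (S n))) / real n) \<longlonglongrightarrow> entropy_L L Q"
  proof (intro allI impI)
    fix S :: "nat \<Rightarrow> nat list set"
    assume hS: "\<forall>n\<ge>1. S n \<noteq> {} \<and> S n \<subseteq> words L n \<and> Dcode L Q n (S n) = Dstar L Q n"
    have "(\<lambda>n. log 2 (real (card (S n))) / real n) \<longlonglongrightarrow> mu cc"
      by (rule rate_limit[OF upper_Dstar L1 hS])
    then show "(\<lambda>n. log 2 (real (card (S n))) / real n) \<longlonglongrightarrow> entropy_L L Q"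
      by (simp add: mu_cc)
  qed
  show ?thesis using part1 part2 by blast
qed

end
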